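(* Let $(X,b,m)$ be a connected weighted graph satisfying conditions (B) and (M). Let $\Omega\subset X$ be non-empty with $\Omega\ne X$, and assume $\mathrm{vol}(\Omega)<\infty$ and $\mathrm{Inr}(\Omega)<\infty$. Then: (a) $\displaystyle \lambda_\Omega\ge \frac{1}{\mathrm{Inr}(\Omega)\,\mathrm{vol}(\Omega)}$. (b) If moreover $\mathrm{vol}(X)<\infty$, then $\displaystyle \lambda_\Omega\le \|H\|\,\frac{\mathrm{vol}(X)-\mathrm{vol}(\Omega)}{\mathrm{vol}(X)}$.
   Context: A weighted graph $(X,b,m)$ consists of a countable set $X$, a symmetric function $b:X\times X\to[0,\infty)$ with $b(x,x)=0$ and $\sum_{y}b(x,y)<\infty$ for all $x$, and $m:X\to(0,\infty)$; $\mathrm{vol}(A):=\sum_{x\in A}m(x)$. Condition (B): $\delta:=\sup_{x}\frac{1}{m(x)}\sum_{y}b(x,y)<\infty$. Condition (M): $\sup_x m(x)<\infty$. On $\ell^2(X,m)=\{f:X\to\mathbb{C}: \sum_x|f(x)|^2m(x)<\infty\}$ consider the bounded form $\mathcal{E}(f,g)=\frac12\sum_{x,y}b(x,y)(f(x)-f(y))(\overline{g(x)}-\overline{g(y)})$ and the associated bounded selfadjoint operator $(Hf)(x)=\frac{1}{m(x)}\sum_y b(x,y)(f(x)-f(y))$. A path is $\gamma=(x_0,\dots,x_k)$ with $b(x_j,x_{j+1})>0$, of length $L(\gamma)=\sum_{j=0}^{k-1}1/b(x_j,x_{j+1})$ (trivial paths have length $0$); connected means any two points are joined by a path; $d(x,y)$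 is the infimum of lengths of paths from $x$ to $y$, and $U_r(x):=\{y: d(x,y)<r\}$. For $\Omega\subset X$, identify $\ell^2(\Omega,m)$ with $\{f\in\ell^2(X,m): f=0 \text{ on } X\setminus\Omega\}$; $\mathcal{E}_\Omega$ is the restriction of $\mathcal{E}$ to this space, $H_\Omega$ the associated selfadjoint operator on $\ell^2(\Omega,m)$ (the Dirichlet Laplacian), and $\lambda_\Omega:=\min\sigma(H_\Omega)$. The inradius is $\mathrm{Inr}(\Omega):=\sup\{r>0:\exists x\in\Omega \text{ with } U_r(x)\subset\Omega\}$. *)

theory Defs
  imports "HOL-Analysis.Analysis"
begin

definition weighted_graph :: "('a::countable \<Rightarrow> 'a \<Rightarrow> real) \<Rightarrow> ('a \<Rightarrow> real) \<Rightarrow> bool" where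
  "weighted_graph b m \<longleftrightarrow>
     (\<forall>x y. b x y \<ge> 0) \<and> (\<forall>x y. b x y = b y x) \<and> (\<forall>x. b x x = 0) \<and>
     (\<forall>x. (\<lambda>y. b x y) summable_on UNIV) \<and> (\<forall>x. m x > 0)"

definition condB :: "('a \<Rightarrow> 'a \<Rightarrow> real) \<Rightarrow> ('a \<Rightarrow> real) \<Rightarrow> bool" where
  "condB b m \<longleftrightarrow> bdd_above (range (\<lambda>x. (\<Sum>\<^sub>\<infinity>y. b x y) / m x))"

definition condM :: "('a \<Rightarrow> real) \<Rightarrow> bool" where
  "condM m \<longleftrightarrow> bdd_above (range m)"

definition vol :: "('a \<Rightarrow> real) \<Rightarrow> 'a set \<Rightarrow> ennreal" where
  "vol m A = (\<Sum>\<^sub>\<infinity>x\<in>A. ennreal (m x))"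

definition is_path :: "('a \<Rightarrow> 'a \<Rightarrow> real) \<Rightarrow> 'a list \<Rightarrow> 'a \<Rightarrow> 'a \<Rightarrow> bool" where
  "is_path b p x y \<longleftrightarrow> p \<noteq> [] \<and> hd p = x \<and> last p = y \<and>
     (\<forall>i. Suc i < length p \<longrightarrow> b (p ! i) (p ! Suc i) > 0)"

definition path_length :: "('a \<Rightarrow> 'a \<Rightarrow> real) \<Rightarrow> 'a list \<Rightarrow> real" where
  "path_length b p = (\<Sum>i<length p - 1. 1 / b (p ! i) (p ! Suc i))"

definition graph_connected :: "('a \<Rightarrow> 'a \<Rightarrow> real) \<Rightarrow> bool" where
  "graph_connected b \<longleftrightarrow> (\<forall>x y. \<exists>p. is_path b p x y)"

definition gdist :: "('a \<Rightarrow> 'a \<Rightarrow> real) \<Rightarrow> 'a \<Rightarrow> 'a \<Rightarrow> real" where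
  "gdist b x y = Inf {path_length b p | p. is_path b p x y}"

definition gball :: "('a \<Rightarrow> 'a \<Rightarrow> real) \<Rightarrow> 'a \<Rightarrow> real \<Rightarrow> 'a set" where
  "gball b x r = {y. gdist b x y < r}"

definition inradius :: "('a \<Rightarrow> 'a \<Rightarrow> real) \<Rightarrow> 'a set \<Rightarrow> ereal" where
  "inradius b \<Omega> = Sup {ereal r | r. r > 0 \<and> (\<exists>x\<in>\<Omega>. gball b x r \<subseteq> \<Omega>)}"

text \<open>The space l^2(Omega,m), embedded as functions vanishing outside Omega.\<close>

definition ell2 :: "('a \<Rightarrow> real) \<Rightarrow> 'a set \<Rightarrow> ('a \<Rightarrow> complex) set" where
  "ell2 m \<Omega> = {f. (\<forall>x. x \<notin> \<Omega> \<longrightarrow> f x = 0) \<and> (\<lambda>x. (cmod (f x))\<^sup>2 * m x) summable_on UNIV}"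

definition l2inner :: "('a \<Rightarrow> real) \<Rightarrow> ('a \<Rightarrow> complex) \<Rightarrow> ('a \<Rightarrow> complex) \<Rightarrow> complex" where
  "l2inner m f g = (\<Sum>\<^sub>\<infinity>x. f x * cnj (g x) * complex_of_real (m x))"

definition l2norm :: "('a \<Rightarrow> real) \<Rightarrow> ('a \<Rightarrow> complex) \<Rightarrow> real" where
  "l2norm m f = sqrt (\<Sum>\<^sub>\<infinity>x. (cmod (f x))\<^sup>2 * m x)"

definition energy :: "('a \<Rightarrow> 'a \<Rightarrow> real) \<Rightarrow> ('a \<Rightarrow> complex) \<Rightarrow> ('a \<Rightarrow> complex) \<Rightarrow> complex" where
  "energy b f g = (1/2) * (\<Sum>\<^sub>\<infinity>(x,y). complex_of_real (b x y) * (f x - f y) * cnj (g x - g y))"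

definition laplacian :: "('a \<Rightarrow> 'a \<Rightarrow> real) \<Rightarrow> ('a \<Rightarrow> real) \<Rightarrow> ('a \<Rightarrow> complex) \<Rightarrow> 'a \<Rightarrow> complex" where
  "laplacian b m f x = (1 / complex_of_real (m x)) *
      (\<Sum>\<^sub>\<infinity>y. complex_of_real (b x y) * (f x - f y))"

definition laplacian_norm :: "('a \<Rightarrow> 'a \<Rightarrow> real) \<Rightarrow> ('a \<Rightarrow> real) \<Rightarrow> real" where
  "laplacian_norm b m = Sup {l2norm m (laplacian b m f) | f. f \<in> ell2 m UNIV \<and> l2norm m f \<le> 1}"

text \<open>Dirichlet Laplacian H_Omega: the selfadjoint operator on l^2(Omega,m)
  associated with the restricted form E_Omega, i.e. E(f,g) = <H_Omega f, g>.\<close>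

definition dirichlet_laplacian :: "('a \<Rightarrow> 'a \<Rightarrow> real) \<Rightarrow> ('a \<Rightarrow> real) \<Rightarrow> 'a set \<Rightarrow> ('a \<Rightarrow> complex) \<Rightarrow> ('a \<Rightarrow> complex)" where
  "dirichlet_laplacian b m \<Omega> f =
     (THE u. u \<in> ell2 m \<Omega> \<and> (\<forall>g \<in> ell2 m \<Omega>. energy b f g = l2inner m u g))"

definition op_spectrum :: "('a \<Rightarrow> complex) set \<Rightarrow> (('a \<Rightarrow> complex) \<Rightarrow> ('a \<Rightarrow> complex)) \<Rightarrow> complex set" where
  "op_spectrum V A = {z. \<not> bij_betw (\<lambda>f x. A f x - z * f x) V V}"

definition dirichlet_bottom :: "('a \<Rightarrow> 'a \<Rightarrow> real) \<Rightarrow> ('a \<Rightarrow> real) \<Rightarrow> 'a set \<Rightarrow> real" where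
  "dirichlet_bottom b m \<Omega> =
     Inf {t::real. complex_of_real t \<in> op_spectrum (ell2 m \<Omega>) (dirichlet_laplacian b m \<Omega>)}"

end

theory Submission imports Defs begin

locale wg =
  fixes b :: "'a::countable \<Rightarrow> 'a \<Rightarrow> real" and m :: "'a \<Rightarrow> real"
  assumes WG: "weighted_graph b m" and CB: "condB b m" and CM: "condM m"
begin

lemma b_nn: "b x y \<ge> 0" using WG unfolding weighted_graph_def by blast
lemma b_sym: "b x y = b y x" using WG unfolding weighted_graph_def by blast
lemma b_diag: "b x x = 0" using WG unfolding weighted_graph_def by blast
lemma b_summ: "(\<lambda>y. b x y) summable_on UNIV" using WG unfolding weighted_graph_def by blast
lemma m_pos: "m x > 0" using WG unfolding weighted_graph_def by blast
lemma m_nn[simp]: "m x \<ge> 0" using m_pos less_imp_le by blast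

definition deg where "deg x = (\<Sum>\<^sub>\<infinity>y. b x y)"
definition dd where "dd = (SUP x. deg x / m x)"
definition MM where "MM = (SUP x. m x)"

lemma deg_has_sum: "((\<lambda>y. b x y) has_sum deg x) UNIV"
  using b_summ deg_def by auto

lemma deg_nn: "deg x \<ge> 0"
  unfolding deg_def by (simp add: b_nn infsum_nonneg)

lemma deg_div_le: "deg x / m x \<le> dd"
  unfolding dd_def using CB unfolding condB_def deg_def by (intro cSUP_upper) auto

lemma deg_le: "deg x \<le> dd * m x"
  using deg_div_le[of x] m_pos[of x] by (simp add: divide_le_eq)

lemma dd_nn: "dd \<ge> 0"
  using deg_div_le[of undefined] deg_nn[of undefined] m_pos[of undefined]
  by (smt (verit) divide_nonneg_pos)

lemma m_le: "m x \<le> MM"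
  unfolding MM_def using CM unfolding condM_def by (intro cSUP_upper) auto

lemma b_le_deg: "b x y \<le> deg x"
proof -
  have "sum (\<lambda>y. b x y) {y} \<le> deg x"
    unfolding deg_def by (rule finite_sum_le_infsum) (auto simp: b_summ b_nn)
  then show ?thesis by simp
qed

lemma b_le1: "b x y \<le> dd * m x" using b_le_deg deg_le order_trans by blast
lemma b_le2: "b x y \<le> dd * m y" using b_le1[of y x] b_sym by simp

lemma pair_summ1:
  assumes "\<And>x. h x \<ge> 0" "(\<lambda>x. deg x * h x) summable_on UNIV"
  shows "(\<lambda>(x,y). b x y * h x) summable_on UNIV"
proof -
  have "(\<lambda>(x,y). b x y * h x) summable_on Sigma UNIV (\<lambda>_. UNIV)"
  proof (rule summable_on_SigmaI[where g="\<lambda>x. deg x * h x"])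
    fix x show "((\<lambda>y. case (x, y) of (x, y) \<Rightarrow> b x y * h x) has_sum deg x * h x) UNIV"
      using has_sum_cmult_left[OF deg_has_sum[of x], of "h x"] by simp
  qed (use assms b_nn in auto)
  then show ?thesis by simp
qed

lemma pair_summ2:
  assumes "\<And>x. h x \<ge> 0" "(\<lambda>x. deg x * h x) summable_on UNIV"
  shows "(\<lambda>(x,y). b x y * h y) summable_on UNIV"
proof -
  have "(\<lambda>(x,y). b x y * h x) summable_on (UNIV \<times> UNIV)"
    using pair_summ1[OF assms] by simp
  then have "(\<lambda>(x,y). (\<lambda>(x,y). b x y * h x) (y,x)) summable_on (UNIV \<times> UNIV)"
    by (subst (asm) summable_on_swap) simp
  then show ?thesis by (simp add: b_sym)
qed


lemma real_cs_aux:
  fixes a A B :: real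
  assumes "a \<ge> 0" "A \<ge> 0" "B \<ge> 0" "\<And>t. t > 0 \<Longrightarrow> 2 * a \<le> t * A + B / t"
  shows "a\<^sup>2 \<le> A * B"
proof (rule ccontr)
  assume c: "\<not> a\<^sup>2 \<le> A * B"
  then have ap: "a > 0" using assms by (cases "a = 0") (auto simp: less_le)
  show False
  proof (cases "A > 0")
    case True
    have "2 * a \<le> (a/A) * A + B / (a/A)" using assms(4)[of "a/A"] ap True by simp
    then have "a \<le> A * B / a" using True ap by (simp add: field_simps)
    then have "a * a \<le> A * B" using ap by (simp add: field_simps)
    then show False using c by (simp add: power2_eq_square)
  next
    case False
    then have A0: "A = 0" using assms by simp
    have tp: "B/a + 1 > 0" using ap assms(3) by (simp add: add_nonneg_pos)
    have "2 * a \<le> B / (B/a + 1)" using assms(4)[OF tp] A0 by simp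
    also have "B / (B/a + 1) = a * B / (B + a)" using ap by (simp add: field_simps)
    also have "\<dots> < a" using ap assms(3) by (simp add: divide_less_eq algebra_simps add_nonneg_pos)
    finally show False using ap by simp
  qed
qed

lemma amgm_t: "t > 0 \<Longrightarrow> 2 * (a::real) * c \<le> t * a\<^sup>2 + c\<^sup>2 / t"
proof -
  assume t: "t > 0"
  have "0 \<le> (t * a - c)\<^sup>2" by simp
  then have "2 * t * a * c \<le> t\<^sup>2 * a\<^sup>2 + c\<^sup>2" by (simp add: power2_eq_square algebra_simps)
  then have "2 * a * c \<le> (t\<^sup>2 * a\<^sup>2 + c\<^sup>2) / t" using t by (simp add: field_simps)
  also have "\<dots> = t * a\<^sup>2 + c\<^sup>2 / t" using t by (simp add: field_simps power2_eq_square)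
  finally show ?thesis .
qed

definition nsq :: "('a \<Rightarrow> complex) \<Rightarrow> 'a \<Rightarrow> real" where
  "nsq f x = (cmod (f x))\<^sup>2 * m x"

lemma nsq_nn: "nsq f x \<ge> 0" unfolding nsq_def using m_pos[of x] by simp

lemma ell2_iff: "f \<in> ell2 m A \<longleftrightarrow> (\<forall>x. x \<notin> A \<longrightarrow> f x = 0) \<and> nsq f summable_on UNIV"
  unfolding ell2_def nsq_def by (simp add: fun_eq_iff)

lemma ell2_summ: "f \<in> ell2 m A \<Longrightarrow> nsq f summable_on UNIV" by (simp add: ell2_iff)
lemma ell2_UNIV: "f \<in> ell2 m A \<Longrightarrow> f \<in> ell2 m UNIV" by (simp add: ell2_iff)
lemma ell2_zero: "f \<in> ell2 m A \<Longrightarrow> x \<notin> A \<Longrightarrow> f x = 0" by (simp add: ell2_iff)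

lemma l2norm_sq: "(l2norm m f)\<^sup>2 = (\<Sum>\<^sub>\<infinity>x. nsq f x)"
proof -
  have "(\<Sum>\<^sub>\<infinity>x. nsq f x) \<ge> 0" by (intro infsum_nonneg nsq_nn)
  moreover have "l2norm m f = sqrt (\<Sum>\<^sub>\<infinity>x. nsq f x)" unfolding l2norm_def nsq_def ..
  ultimately show ?thesis using real_sqrt_pow2 by metis
qed

lemma l2norm_eq: "l2norm m f = sqrt (\<Sum>\<^sub>\<infinity>x. nsq f x)" unfolding l2norm_def nsq_def ..

lemma l2norm_nn: "l2norm m f \<ge> 0"
  unfolding l2norm_eq by (intro real_sqrt_ge_zero infsum_nonneg nsq_nn)

lemma sum_abs_prod:
  assumes f: "f \<in> ell2 m UNIV" and g: "g \<in> ell2 m UNIV"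
  shows "(\<lambda>x. cmod (f x) * cmod (g x) * m x) summable_on UNIV"
    and "(\<Sum>\<^sub>\<infinity>x. cmod (f x) * cmod (g x) * m x) \<le> l2norm m f * l2norm m g"
proof -
  have bd: "2 * (cmod (f x) * cmod (g x) * m x) \<le> t * nsq f x + nsq g x / t" if "t > 0" for t x
    using mult_right_mono[OF amgm_t[OF that, of "cmod (f x)" "cmod (g x)"], of "m x"] m_pos[of x]
    unfolding nsq_def by (simp add: algebra_simps)
  have sf: "nsq f summable_on UNIV" and sg: "nsq g summable_on UNIV" using f g ell2_summ by auto
  have s1: "(\<lambda>x. 1 * nsq f x + nsq g x / 1) summable_on UNIV"
    using summable_on_add[OF sf sg] by simp
  have "(\<lambda>x. 2 * (cmod (f x) * cmod (g x) * m x)) summable_on UNIV"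
    by (rule summable_on_comparison_test[OF s1]) (use bd[of 1] m_pos in \<open>auto intro!: mult_nonneg_nonneg simp: less_imp_le\<close>)
  then show S: "(\<lambda>x. cmod (f x) * cmod (g x) * m x) summable_on UNIV"
    using summable_on_cmult_right'[of 2] by (metis zero_neq_numeral)
  define a where "a = (\<Sum>\<^sub>\<infinity>x. cmod (f x) * cmod (g x) * m x)"
  have "a\<^sup>2 \<le> (\<Sum>\<^sub>\<infinity>x. nsq f x) * (\<Sum>\<^sub>\<infinity>x. nsq g x)"
  proof (rule real_cs_aux)
    show "a \<ge> 0" unfolding a_def by (intro infsum_nonneg) simp
    show "(\<Sum>\<^sub>\<infinity>x. nsq f x) \<ge> 0" "(\<Sum>\<^sub>\<infinity>x. nsq g x) \<ge> 0" by (auto intro: infsum_nonneg nsq_nn)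
    fix t :: real assume t: "t > 0"
    have "2 * a = (\<Sum>\<^sub>\<infinity>x. 2 * (cmod (f x) * cmod (g x) * m x))"
      unfolding a_def by (simp add: infsum_cmult_right')
    also have "\<dots> \<le> (\<Sum>\<^sub>\<infinity>x. t * nsq f x + nsq g x / t)"
      using bd[OF t] S sf sg
      by (intro infsum_mono) (auto intro!: summable_on_add summable_on_cmult_right summable_on_cmult_left
          simp: divide_inverse)
    also have "\<dots> = t * (\<Sum>\<^sub>\<infinity>x. nsq f x) + (\<Sum>\<^sub>\<infinity>x. nsq g x) / t"
      using sf sg by (subst infsum_add) (auto intro!: summable_on_cmult_right summable_on_cmult_left
          simp: divide_inverse infsum_cmult_right' infsum_cmult_left')
    finally show "2 * a \<le> t * (\<Sum>\<^sub>\<infinity>x. nsq f x) + (\<Sum>\<^sub>\<infinity>x. nsq g x) / t" .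
  qed
  also have "\<dots> = (l2norm m f * l2norm m g)\<^sup>2" by (simp add: l2norm_sq power_mult_distrib)
  finally have "a\<^sup>2 \<le> (l2norm m f * l2norm m g)\<^sup>2" .
  then show "a \<le> l2norm m f * l2norm m g"
    using l2norm_nn by (meson mult_nonneg_nonneg power2_le_imp_le)
qed


lemma cmod_add_sq: "(cmod (a + c))\<^sup>2 \<le> 2 * (cmod a)\<^sup>2 + 2 * (cmod c)\<^sup>2"
proof -
  have "cmod (a + c) \<le> cmod a + cmod c" by (rule norm_triangle_ineq)
  then have "(cmod (a + c))\<^sup>2 \<le> (cmod a + cmod c)\<^sup>2" by (simp add: power_mono)
  also have "\<dots> \<le> 2 * (cmod a)\<^sup>2 + 2 * (cmod c)\<^sup>2"
    using sum_squares_ge_zero[of "cmod a - cmod c" 0] by (simp add: power2_eq_square algebra_simps)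
  finally show ?thesis .
qed

lemma ell2_add: "f \<in> ell2 m A \<Longrightarrow> g \<in> ell2 m A \<Longrightarrow> (\<lambda>x. f x + g x) \<in> ell2 m A"
proof -
  assume f: "f \<in> ell2 m A" and g: "g \<in> ell2 m A"
  have "(\<lambda>x. 2 * nsq f x + 2 * nsq g x) summable_on UNIV"
    using f g by (intro summable_on_add summable_on_cmult_right ell2_summ)
  moreover have "nsq (\<lambda>x. f x + g x) x \<le> 2 * nsq f x + 2 * nsq g x" for x
    using mult_right_mono[OF cmod_add_sq[of "f x" "g x"] m_nn[of x]] by (simp add: nsq_def algebra_simps)
  ultimately have "nsq (\<lambda>x. f x + g x) summable_on UNIV"
    by (rule summable_on_comparison_test) (auto simp: nsq_nn)
  then show ?thesis using f g by (simp add: ell2_iff)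
qed

lemma ell2_scale: "f \<in> ell2 m A \<Longrightarrow> (\<lambda>x. c * f x) \<in> ell2 m A"
proof -
  assume f: "f \<in> ell2 m A"
  have "(\<lambda>x. (cmod c)\<^sup>2 * nsq f x) summable_on UNIV"
    using f by (intro summable_on_cmult_right ell2_summ)
  moreover have "nsq (\<lambda>x. c * f x) = (\<lambda>x. (cmod c)\<^sup>2 * nsq f x)"
    by (auto simp: nsq_def norm_mult power_mult_distrib)
  ultimately show ?thesis using f by (simp add: ell2_iff)
qed

lemma ell2_diff: "f \<in> ell2 m A \<Longrightarrow> g \<in> ell2 m A \<Longrightarrow> (\<lambda>x. f x - g x) \<in> ell2 m A"
  using ell2_add[of f A "\<lambda>x. (-1) * g x"] ell2_scale[of g A "-1"] by simp

lemma ell2_0: "(\<lambda>x. 0) \<in> ell2 m A" by (simp add: ell2_iff nsq_def[abs_def])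

lemma ip_summ: "f \<in> ell2 m UNIV \<Longrightarrow> g \<in> ell2 m UNIV \<Longrightarrow>
   (\<lambda>x. f x * cnj (g x) * complex_of_real (m x)) summable_on UNIV"
  unfolding summable_on_iff_abs_summable_on_complex
  using sum_abs_prod(1)[of f g] by (simp add: norm_mult)

lemma ip_bound: "f \<in> ell2 m UNIV \<Longrightarrow> g \<in> ell2 m UNIV \<Longrightarrow>
   cmod (l2inner m f g) \<le> l2norm m f * l2norm m g"
proof -
  assume f: "f \<in> ell2 m UNIV" and g: "g \<in> ell2 m UNIV"
  have "cmod (l2inner m f g) \<le> (\<Sum>\<^sub>\<infinity>x. cmod (f x * cnj (g x) * complex_of_real (m x)))"
    unfolding l2inner_def using ip_summ[OF f g]
    by (intro norm_infsum_bound) (simp add: summable_on_iff_abs_summable_on_complex[symmetric])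
  also have "\<dots> = (\<Sum>\<^sub>\<infinity>x. cmod (f x) * cmod (g x) * m x)" by (simp add: norm_mult)
  also have "\<dots> \<le> l2norm m f * l2norm m g" using sum_abs_prod(2)[OF f g] .
  finally show ?thesis .
qed

lemma ip_add1: "f \<in> ell2 m UNIV \<Longrightarrow> g \<in> ell2 m UNIV \<Longrightarrow> h \<in> ell2 m UNIV \<Longrightarrow>
   l2inner m (\<lambda>x. f x + g x) h = l2inner m f h + l2inner m g h"
proof -
  assume f: "f \<in> ell2 m UNIV" and g: "g \<in> ell2 m UNIV" and h: "h \<in> ell2 m UNIV"
  have e: "(\<lambda>x. (f x + g x) * cnj (h x) * complex_of_real (m x)) = (\<lambda>x. f x * cnj (h x) * complex_of_real (m x) + g x * cnj (h x) * complex_of_real (m x))"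
    by (simp add: algebra_simps)
  show ?thesis unfolding l2inner_def e by (rule infsum_add) (use ip_summ f g h in auto)
qed

lemma ip_scale1: "l2inner m (\<lambda>x. c * f x) g = c * l2inner m f g"
  unfolding l2inner_def by (subst infsum_cmult_right'[symmetric]) (simp add: algebra_simps)

lemma ip_cnj: "l2inner m g f = cnj (l2inner m f g)"
  unfolding l2inner_def by (subst infsum_cnj[symmetric]) (simp add: algebra_simps del: infsum_cnj)

lemma ip_diff1: "f \<in> ell2 m UNIV \<Longrightarrow> g \<in> ell2 m UNIV \<Longrightarrow> h \<in> ell2 m UNIV \<Longrightarrow>
   l2inner m (\<lambda>x. f x - g x) h = l2inner m f h - l2inner m g h"
  using ip_add1[of f "\<lambda>x. (-1) * g x" h] ip_scale1[of "-1" g h] ell2_scale[of g UNIV "-1"] by simp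

lemma ip_add2: "f \<in> ell2 m UNIV \<Longrightarrow> g \<in> ell2 m UNIV \<Longrightarrow> h \<in> ell2 m UNIV \<Longrightarrow>
   l2inner m h (\<lambda>x. f x + g x) = l2inner m h f + l2inner m h g"
  by (subst (1 2 3) ip_cnj) (simp add: ip_add1)

lemma ip_diff2: "f \<in> ell2 m UNIV \<Longrightarrow> g \<in> ell2 m UNIV \<Longrightarrow> h \<in> ell2 m UNIV \<Longrightarrow>
   l2inner m h (\<lambda>x. f x - g x) = l2inner m h f - l2inner m h g"
  by (subst (1 2 3) ip_cnj) (simp add: ip_diff1)

lemma ip_scale2: "l2inner m g (\<lambda>x. c * f x) = cnj c * l2inner m g f"
  by (subst (1 2) ip_cnj) (simp add: ip_scale1)

lemma infsum_of_real_c: "h summable_on A \<Longrightarrow> (\<Sum>\<^sub>\<infinity>x\<in>A. complex_of_real (h x)) = of_real (\<Sum>\<^sub>\<infinity>x\<in>A. h x)"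
  by (intro infsumI has_sum_of_real has_sum_infsum)

lemma ip_self: "f \<in> ell2 m UNIV \<Longrightarrow> l2inner m f f = complex_of_real ((l2norm m f)\<^sup>2)"
proof -
  assume f: "f \<in> ell2 m UNIV"
  have "l2inner m f f = (\<Sum>\<^sub>\<infinity>x. complex_of_real (nsq f x))"
    unfolding l2inner_def nsq_def by (simp only: of_real_mult complex_norm_square)
  also have "\<dots> = complex_of_real (\<Sum>\<^sub>\<infinity>x. nsq f x)" using f ell2_summ infsum_of_real_c by blast
  finally show ?thesis by (simp add: l2norm_sq)
qed

lemma norm_add: "f \<in> ell2 m UNIV \<Longrightarrow> g \<in> ell2 m UNIV \<Longrightarrow>
  l2norm m (\<lambda>x. f x + g x) \<le> l2norm m f + l2norm m g"
proof -
  assume f: "f \<in> ell2 m UNIV" and g: "g \<in> ell2 m UNIV"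
  have pw: "nsq (\<lambda>x. f x + g x) x \<le> nsq f x + 2 * (cmod (f x) * cmod (g x) * m x) + nsq g x" for x
  proof -
    have "(cmod (f x + g x))\<^sup>2 \<le> (cmod (f x) + cmod (g x))\<^sup>2"
      by (simp add: power_mono norm_triangle_ineq)
    then have "(cmod (f x + g x))\<^sup>2 * m x \<le> (cmod (f x) + cmod (g x))\<^sup>2 * m x"
      by (simp add: mult_right_mono)
    then show ?thesis by (simp add: nsq_def power2_eq_square algebra_simps)
  qed
  have S: "(\<lambda>x. cmod (f x) * cmod (g x) * m x) summable_on UNIV" using sum_abs_prod(1)[OF f g] .
  have "(l2norm m (\<lambda>x. f x + g x))\<^sup>2 = (\<Sum>\<^sub>\<infinity>x. nsq (\<lambda>x. f x + g x) x)" by (rule l2norm_sq)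
  also have "\<dots> \<le> (\<Sum>\<^sub>\<infinity>x. nsq f x + 2 * (cmod (f x) * cmod (g x) * m x) + nsq g x)"
    using pw ell2_summ[OF ell2_add[OF f g]] ell2_summ[OF f] ell2_summ[OF g] S
    by (intro infsum_mono) (auto intro!: summable_on_add summable_on_cmult_right)
  also have "\<dots> = (\<Sum>\<^sub>\<infinity>x. nsq f x) + 2 * (\<Sum>\<^sub>\<infinity>x. cmod (f x) * cmod (g x) * m x) + (\<Sum>\<^sub>\<infinity>x. nsq g x)"
    using ell2_summ[OF f] ell2_summ[OF g] S
    by (simp add: infsum_add summable_on_add summable_on_cmult_right infsum_cmult_right')
  also have "\<dots> \<le> (l2norm m f)\<^sup>2 + 2 * (l2norm m f * l2norm m g) + (l2norm m g)\<^sup>2"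
    using sum_abs_prod(2)[OF f g] by (simp add: l2norm_sq)
  also have "\<dots> = (l2norm m f + l2norm m g)\<^sup>2" by (simp add: power2_eq_square algebra_simps)
  finally show ?thesis using l2norm_nn by (meson add_nonneg_nonneg power2_le_imp_le)
qed

lemma norm_scale: "l2norm m (\<lambda>x. c * f x) = cmod c * l2norm m f"
proof -
  have "nsq (\<lambda>x. c * f x) = (\<lambda>x. (cmod c)\<^sup>2 * nsq f x)"
    by (auto simp: nsq_def norm_mult power_mult_distrib)
  then show ?thesis unfolding l2norm_eq by (simp add: infsum_cmult_right' real_sqrt_mult)
qed

lemma norm_minus_comm: "l2norm m (\<lambda>x. f x - g x) = l2norm m (\<lambda>x. g x - f x)"
  unfolding l2norm_def by (simp add: norm_minus_commute)

lemma norm_diff: "f \<in> ell2 m UNIV \<Longrightarrow> g \<in> ell2 m UNIV \<Longrightarrow>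
  l2norm m (\<lambda>x. f x - g x) \<le> l2norm m f + l2norm m g"
  using norm_add[of f "\<lambda>x. (-1) * g x"] ell2_scale[of g UNIV "-1"] norm_scale[of "-1" g] by simp

lemma norm_zero_iff: "f \<in> ell2 m A \<Longrightarrow> l2norm m f = 0 \<longleftrightarrow> f = (\<lambda>x. 0)"
proof
  assume f: "f \<in> ell2 m A" and z: "l2norm m f = 0"
  have "(\<Sum>\<^sub>\<infinity>x. nsq f x) \<le> 0" using z l2norm_sq[of f] by simp
  then have "nsq f x = 0" for x
    using nonneg_infsum_le_0D[of "nsq f" UNIV x] ell2_summ[OF f] nsq_nn by simp
  then have "f x = 0" for x using m_pos[of x] unfolding nsq_def by (metis less_irrefl mult_eq_0_iff zero_eq_power2 norm_eq_zero)
  then show "f = (\<lambda>x. 0)" by auto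
next
  assume "f = (\<lambda>x. 0)" then show "l2norm m f = 0" by (simp add: l2norm_def)
qed


definition dV where "dV f g = l2norm m (\<lambda>x. f x - g x)"

lemma nsq_le_norm: "f \<in> ell2 m UNIV \<Longrightarrow> nsq f x \<le> (l2norm m f)\<^sup>2"
proof -
  assume f: "f \<in> ell2 m UNIV"
  have "sum (nsq f) {x} \<le> (\<Sum>\<^sub>\<infinity>x. nsq f x)"
    by (rule finite_sum_le_infsum) (use ell2_summ[OF f] nsq_nn in auto)
  then show ?thesis by (simp add: l2norm_sq)
qed

lemma metric_V: "Metric_space (ell2 m A) dV"
proof
  fix f g h
  show "0 \<le> dV f g" by (simp add: dV_def l2norm_nn)
  show "dV f g = dV g f" unfolding dV_def by (rule norm_minus_comm)
  assume f: "f \<in> ell2 m A" and g: "g \<in> ell2 m A"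
  show "(dV f g = 0) = (f = g)"
    unfolding dV_def by (subst norm_zero_iff[OF ell2_diff[OF f g]]) (auto simp: fun_eq_iff)
  assume h: "h \<in> ell2 m A"
  have "dV f h = l2norm m (\<lambda>x. (f x - g x) + (g x - h x))" by (simp add: dV_def)
  also have "\<dots> \<le> dV f g + dV g h" unfolding dV_def
    by (rule norm_add[OF ell2_UNIV[OF ell2_diff[OF f g]] ell2_UNIV[OF ell2_diff[OF g h]]])
  finally show "dV f h \<le> dV f g + dV g h" .
qed

lemma ell2_complete:
  fixes \<sigma> :: "nat \<Rightarrow> 'a \<Rightarrow> complex"
  assumes sig: "\<And>n. \<sigma> n \<in> ell2 m A"
    and C: "\<And>\<epsilon>. \<epsilon> > 0 \<Longrightarrow> \<exists>N. \<forall>n n'. N \<le> n \<longrightarrow> N \<le> n' \<longrightarrow> dV (\<sigma> n) (\<sigma> n') < \<epsilon>"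
  shows "\<exists>l \<in> ell2 m A. \<forall>\<epsilon>>0. \<exists>N. \<forall>n\<ge>N. dV (\<sigma> n) l < \<epsilon>"
proof -
  have pw: "cmod (\<sigma> n x - \<sigma> k x) \<le> dV (\<sigma> n) (\<sigma> k) / sqrt (m x)" for n k x
  proof -
    have "nsq (\<lambda>x. \<sigma> n x - \<sigma> k x) x \<le> (dV (\<sigma> n) (\<sigma> k))\<^sup>2"
      unfolding dV_def by (rule nsq_le_norm) (use ell2_diff ell2_UNIV sig in blast)
    then have "(cmod (\<sigma> n x - \<sigma> k x) * sqrt (m x))\<^sup>2 \<le> (dV (\<sigma> n) (\<sigma> k))\<^sup>2"
      by (simp add: nsq_def power_mult_distrib)
    then have "cmod (\<sigma> n x - \<sigma> k x) * sqrt (m x) \<le> dV (\<sigma> n) (\<sigma> k)"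
      by (rule power2_le_imp_le) (simp add: dV_def l2norm_nn)
    then show ?thesis using m_pos[of x] by (simp add: pos_le_divide_eq)
  qed
  have cau: "Cauchy (\<lambda>n. \<sigma> n x)" for x
  proof (rule metric_CauchyI)
    fix e :: real assume e: "e > 0"
    have sp: "sqrt (m x) > 0" using m_pos by simp
    obtain N where N: "\<And>n n'. N \<le> n \<Longrightarrow> N \<le> n' \<Longrightarrow> dV (\<sigma> n) (\<sigma> n') < e * sqrt (m x)"
      using C[of "e * sqrt (m x)"] e sp by auto
    show "\<exists>M. \<forall>ma\<ge>M. \<forall>n\<ge>M. dist (\<sigma> ma x) (\<sigma> n x) < e"
    proof (intro exI allI impI)
      fix n n' assume "N \<le> n" "N \<le> n'"
      then have "dV (\<sigma> n) (\<sigma> n') / sqrt (m x) < e" using N sp by (simp add: divide_less_eq)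
      then show "dist (\<sigma> n x) (\<sigma> n' x) < e" using pw[of n x n'] by (simp add: dist_norm)
    qed
  qed
  define l where "l x = lim (\<lambda>n. \<sigma> n x)" for x
  have lim: "(\<lambda>n. \<sigma> n x) \<longlonglongrightarrow> l x" for x
    unfolding l_def using cau[of x] by (simp add: Cauchy_convergent_iff convergent_LIMSEQ_iff)
  have tail: "\<exists>N. \<forall>n\<ge>N. nsq (\<lambda>x. \<sigma> n x - l x) summable_on UNIV \<and> dV (\<sigma> n) l \<le> \<epsilon>" if e: "\<epsilon> > 0" for \<epsilon>
  proof -
    obtain N where N: "\<And>n n'. N \<le> n \<Longrightarrow> N \<le> n' \<Longrightarrow> dV (\<sigma> n) (\<sigma> n') < \<epsilon>"
      using C e by blast
    show ?thesis
    proof (intro exI allI impI conjI)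
      fix n assume n: "N \<le> n"
      have fs: "sum (nsq (\<lambda>x. \<sigma> n x - l x)) F \<le> \<epsilon>\<^sup>2" if F: "finite F" for F
      proof -
        have t: "(\<lambda>k. sum (nsq (\<lambda>x. \<sigma> n x - \<sigma> k x)) F) \<longlonglongrightarrow> sum (nsq (\<lambda>x. \<sigma> n x - l x)) F"
          unfolding nsq_def by (intro tendsto_intros lim)
        show ?thesis
        proof (rule LIMSEQ_le_const2[OF t], intro exI allI impI)
          fix k assume k: "N \<le> k"
          have "sum (nsq (\<lambda>x. \<sigma> n x - \<sigma> k x)) F \<le> (\<Sum>\<^sub>\<infinity>x. nsq (\<lambda>x. \<sigma> n x - \<sigma> k x) x)"
            using finite_sum_le_infsum[OF ell2_summ[OF ell2_diff[OF sig sig]] F subset_UNIV] nsq_nn by blast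
          also have "\<dots> = (dV (\<sigma> n) (\<sigma> k))\<^sup>2" by (simp add: dV_def l2norm_sq)
          also have "\<dots> \<le> \<epsilon>\<^sup>2" using N[OF n k] by (intro power_mono) (auto simp: dV_def l2norm_nn)
          finally show "sum (nsq (\<lambda>x. \<sigma> n x - \<sigma> k x)) F \<le> \<epsilon>\<^sup>2" .
        qed
      qed
      show S: "nsq (\<lambda>x. \<sigma> n x - l x) summable_on UNIV"
      proof (rule nonneg_bdd_above_summable_on)
        show "bdd_above (sum (nsq (\<lambda>x. \<sigma> n x - l x)) ` {F. F \<subseteq> UNIV \<and> finite F})"
          using fs by (intro bdd_aboveI[of _ "\<epsilon>\<^sup>2"]) blast
      qed (rule nsq_nn)
      have "(dV (\<sigma> n) l)\<^sup>2 \<le> \<epsilon>\<^sup>2" unfolding dV_def l2norm_sq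
        by (rule infsum_le_finite_sums[OF S]) (use fs in auto)
      then show "dV (\<sigma> n) l \<le> \<epsilon>" using e by (meson less_imp_le power2_le_imp_le)
    qed
  qed
  obtain N1 where N1: "\<And>n. n \<ge> N1 \<Longrightarrow> nsq (\<lambda>x. \<sigma> n x - l x) summable_on UNIV" using tail[of 1] by auto
  have "(\<lambda>x. \<sigma> N1 x - l x) \<in> ell2 m UNIV" using N1[of N1] by (simp add: ell2_iff)
  then have "(\<lambda>x. \<sigma> N1 x - (\<sigma> N1 x - l x)) \<in> ell2 m UNIV" using ell2_diff ell2_UNIV sig by blast
  moreover have "l x = 0" if "x \<notin> A" for x
  proof -
    have "(\<lambda>n. \<sigma> n x) = (\<lambda>n. 0)" using sig that by (auto simp: ell2_iff)
    then have "(\<lambda>n. \<sigma> n x) \<longlonglongrightarrow> 0" by simp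
    then show ?thesis using lim[of x] LIMSEQ_unique by blast
  qed
  ultimately have lV: "l \<in> ell2 m A" by (simp add: ell2_iff)
  show ?thesis
  proof (intro bexI[OF _ lV] allI impI)
    fix \<epsilon> :: real assume e: "\<epsilon> > 0"
    obtain N where "\<forall>n\<ge>N. nsq (\<lambda>x. \<sigma> n x - l x) summable_on UNIV \<and> dV (\<sigma> n) l \<le> \<epsilon>/2"
      using tail[of "\<epsilon>/2"] e by auto
    then show "\<exists>N. \<forall>n\<ge>N. dV (\<sigma> n) l < \<epsilon>" using e by (intro exI[of _ N]) (simp add: order_le_less_trans[of _ "\<epsilon>/2"])
  qed
qed

lemma mcomplete_V: "Metric_space.mcomplete (ell2 m A) dV"
proof -
  interpret V: Metric_space "ell2 m A" dV by (rule metric_V)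
  have "\<exists>x. limitin V.mtopology \<sigma> x sequentially" if a: "V.MCauchy \<sigma>" for \<sigma>
  proof -
    have r: "\<And>n. \<sigma> n \<in> ell2 m A" using a unfolding V.MCauchy_def by blast
    have c: "\<And>\<epsilon>. \<epsilon> > 0 \<Longrightarrow> \<exists>N. \<forall>n n'. N \<le> n \<longrightarrow> N \<le> n' \<longrightarrow> dV (\<sigma> n) (\<sigma> n') < \<epsilon>"
      using a unfolding V.MCauchy_def by blast
    obtain l where l: "l \<in> ell2 m A" "\<And>\<epsilon>. \<epsilon> > 0 \<Longrightarrow> \<exists>N. \<forall>n\<ge>N. dV (\<sigma> n) l < \<epsilon>"
      using ell2_complete[of \<sigma> A, OF r c] by blast
    have "limitin V.mtopology \<sigma> l sequentially"
      unfolding V.limitin_metric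
    proof (intro conjI allI impI)
      fix \<epsilon> :: real assume "\<epsilon> > 0"
      then obtain N where "\<forall>n\<ge>N. dV (\<sigma> n) l < \<epsilon>" using l by blast
      then show "\<forall>\<^sub>F x in sequentially. \<sigma> x \<in> ell2 m A \<and> dV (\<sigma> x) l < \<epsilon>"
        using r unfolding eventually_sequentially by blast
    qed (rule l)
    then show ?thesis by blast
  qed
  then show ?thesis unfolding V.mcomplete_def by blast
qed


lemma pair_sum_eq1:
  assumes "\<And>x. h x \<ge> 0" "(\<lambda>x. deg x * h x) summable_on UNIV"
  shows "(\<Sum>\<^sub>\<infinity>(x,y). b x y * h x) = (\<Sum>\<^sub>\<infinity>x. deg x * h x)"
proof -
  have S: "(\<lambda>(x,y). b x y * h x) summable_on Sigma UNIV (\<lambda>_. UNIV)" using pair_summ1[OF assms] by simp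
  have "(\<Sum>\<^sub>\<infinity>x. \<Sum>\<^sub>\<infinity>y. b x y * h x) = (\<Sum>\<^sub>\<infinity>(x,y)\<in>Sigma UNIV (\<lambda>_. UNIV). b x y * h x)"
    using infsum_Sigma'_banach[OF S] by simp
  moreover have "(\<Sum>\<^sub>\<infinity>y. b x y * h x) = deg x * h x" for x
    by (simp add: infsum_cmult_left' deg_def)
  ultimately show ?thesis by simp
qed

lemma pair_sum_eq2:
  assumes "\<And>x. h x \<ge> 0" "(\<lambda>x. deg x * h x) summable_on UNIV"
  shows "(\<Sum>\<^sub>\<infinity>(x,y). b x y * h y) = (\<Sum>\<^sub>\<infinity>x. deg x * h x)"
proof -
  have "((\<lambda>(x,y). b x y * h x) has_sum (\<Sum>\<^sub>\<infinity>x. deg x * h x)) (UNIV \<times> UNIV)"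
    using pair_summ1[OF assms] pair_sum_eq1[OF assms] has_sum_infsum by fastforce
  then have "((\<lambda>(x,y). (\<lambda>(x,y). b x y * h x) (y,x)) has_sum (\<Sum>\<^sub>\<infinity>x. deg x * h x)) (UNIV \<times> UNIV)"
    by (subst (asm) has_sum_swap) simp
  then show ?thesis by (simp add: b_sym infsumI)
qed

lemma deg_ell2:
  assumes f: "f \<in> ell2 m A"
  shows "(\<lambda>x. deg x * (cmod (f x))\<^sup>2) summable_on UNIV"
    and "(\<Sum>\<^sub>\<infinity>x. deg x * (cmod (f x))\<^sup>2) \<le> dd * (l2norm m f)\<^sup>2"
proof -
  have le: "deg x * (cmod (f x))\<^sup>2 \<le> dd * nsq f x" for x
    using mult_right_mono[OF deg_le[of x], of "(cmod (f x))\<^sup>2"] by (simp add: nsq_def algebra_simps)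
  have S: "(\<lambda>x. dd * nsq f x) summable_on UNIV" using f by (intro summable_on_cmult_right ell2_summ)
  show S2: "(\<lambda>x. deg x * (cmod (f x))\<^sup>2) summable_on UNIV"
    by (rule summable_on_comparison_test[OF S]) (use le deg_nn in auto)
  have "(\<Sum>\<^sub>\<infinity>x. deg x * (cmod (f x))\<^sup>2) \<le> (\<Sum>\<^sub>\<infinity>x. dd * nsq f x)"
    by (rule infsum_mono[OF S2 S le])
  also have "\<dots> = dd * (l2norm m f)\<^sup>2" by (simp add: infsum_cmult_right' l2norm_sq)
  finally show "(\<Sum>\<^sub>\<infinity>x. deg x * (cmod (f x))\<^sup>2) \<le> dd * (l2norm m f)\<^sup>2" .
qed

lemma wcs:
  fixes w u :: "'b \<Rightarrow> real"
  assumes w: "\<And>y. w y \<ge> 0" "w summable_on UNIV" and u: "\<And>y. u y \<ge> 0"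
    and wu: "(\<lambda>y. w y * (u y)\<^sup>2) summable_on UNIV"
  shows "(\<lambda>y. w y * u y) summable_on UNIV"
    and "(\<Sum>\<^sub>\<infinity>y. w y * u y)\<^sup>2 \<le> (\<Sum>\<^sub>\<infinity>y. w y) * (\<Sum>\<^sub>\<infinity>y. w y * (u y)\<^sup>2)"
proof -
  have bd: "2 * (w y * u y) \<le> t * w y + w y * (u y)\<^sup>2 / t" if t: "t > 0" for t y
    using mult_left_mono[OF amgm_t[OF t, of 1 "u y"] w(1)[of y]] by (simp add: algebra_simps)
  have s1: "(\<lambda>y. 1 * w y + w y * (u y)\<^sup>2 / 1) summable_on UNIV" using summable_on_add[OF w(2) wu] by simp
  have "(\<lambda>y. 2 * (w y * u y)) summable_on UNIV"
    by (rule summable_on_comparison_test[OF s1]) (use bd[of 1] w u in auto)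
  then show S: "(\<lambda>y. w y * u y) summable_on UNIV"
    using summable_on_cmult_right'[of 2] by (metis zero_neq_numeral)
  show "(\<Sum>\<^sub>\<infinity>y. w y * u y)\<^sup>2 \<le> (\<Sum>\<^sub>\<infinity>y. w y) * (\<Sum>\<^sub>\<infinity>y. w y * (u y)\<^sup>2)"
  proof (rule real_cs_aux)
    show "(\<Sum>\<^sub>\<infinity>y. w y * u y) \<ge> 0" "(\<Sum>\<^sub>\<infinity>y. w y) \<ge> 0" "(\<Sum>\<^sub>\<infinity>y. w y * (u y)\<^sup>2) \<ge> 0"
      using w u by (auto intro!: infsum_nonneg)
    fix t :: real assume t: "t > 0"
    have "2 * (\<Sum>\<^sub>\<infinity>y. w y * u y) = (\<Sum>\<^sub>\<infinity>y. 2 * (w y * u y))" by (simp add: infsum_cmult_right')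
    also have "\<dots> \<le> (\<Sum>\<^sub>\<infinity>y. t * w y + w y * (u y)\<^sup>2 / t)"
      using bd[OF t] S w wu
      by (intro infsum_mono) (auto intro!: summable_on_add summable_on_cmult_right summable_on_cmult_left
          simp: divide_inverse)
    also have "\<dots> = t * (\<Sum>\<^sub>\<infinity>y. w y) + (\<Sum>\<^sub>\<infinity>y. w y * (u y)\<^sup>2) / t"
      using w wu by (subst infsum_add) (auto intro!: summable_on_cmult_right summable_on_cmult_left
          simp: divide_inverse infsum_cmult_right' infsum_cmult_left')
    finally show "2 * (\<Sum>\<^sub>\<infinity>y. w y * u y) \<le> t * (\<Sum>\<^sub>\<infinity>y. w y) + (\<Sum>\<^sub>\<infinity>y. w y * (u y)\<^sup>2) / t" .
  qed
qed

lemma row_sq_summ: "f \<in> ell2 m A \<Longrightarrow> (\<lambda>y. b x y * (cmod (f y))\<^sup>2) summable_on UNIV"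
proof -
  assume f: "f \<in> ell2 m A"
  have S: "(\<lambda>y. dd * nsq f y) summable_on UNIV" using f by (intro summable_on_cmult_right ell2_summ)
  have "b x y * (cmod (f y))\<^sup>2 \<le> dd * nsq f y" for y
    using mult_right_mono[OF b_le2[of x y], of "(cmod (f y))\<^sup>2"] by (simp add: nsq_def algebra_simps)
  then show ?thesis
    by (intro summable_on_comparison_test[OF S]) (auto simp: b_nn)
qed


definition Lr :: "('a \<Rightarrow> complex) \<Rightarrow> 'a \<Rightarrow> complex" where
  "Lr f x = (\<Sum>\<^sub>\<infinity>y. complex_of_real (b x y) * (f x - f y))"

lemma lap_eq: "laplacian b m f x = Lr f x / complex_of_real (m x)"
  unfolding laplacian_def Lr_def by simp

lemma row_abs_summ: "f \<in> ell2 m A \<Longrightarrow> (\<lambda>y. b x y * cmod (f y)) summable_on UNIV"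
  and row_abs_cs: "f \<in> ell2 m A \<Longrightarrow> (\<Sum>\<^sub>\<infinity>y. b x y * cmod (f y))\<^sup>2 \<le> deg x * (\<Sum>\<^sub>\<infinity>y. b x y * (cmod (f y))\<^sup>2)"
  using wcs[of "\<lambda>y. b x y" "\<lambda>y. cmod (f y)"] b_nn b_summ row_sq_summ by (auto simp: deg_def)

lemma row_summ:
  assumes f: "f \<in> ell2 m A"
  shows "(\<lambda>y. complex_of_real (b x y) * (f x - f y)) summable_on UNIV"
    and "cmod (Lr f x) \<le> deg x * cmod (f x) + (\<Sum>\<^sub>\<infinity>y. b x y * cmod (f y))"
proof -
  have le: "cmod (complex_of_real (b x y) * (f x - f y)) \<le> b x y * cmod (f x) + b x y * cmod (f y)" for y
  proof -
    have "cmod (complex_of_real (b x y) * (f x - f y)) = b x y * cmod (f x - f y)"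
      by (simp add: norm_mult b_nn)
    also have "\<dots> \<le> b x y * (cmod (f x) + cmod (f y))"
      by (intro mult_left_mono norm_triangle_ineq4 b_nn)
    finally show ?thesis by (simp add: algebra_simps)
  qed
  have S: "(\<lambda>y. b x y * cmod (f x) + b x y * cmod (f y)) summable_on UNIV"
    by (intro summable_on_add summable_on_cmult_left b_summ row_abs_summ[OF f])
  have A: "(\<lambda>y. cmod (complex_of_real (b x y) * (f x - f y))) summable_on UNIV"
    by (rule summable_on_comparison_test[OF S le]) simp
  then show "(\<lambda>y. complex_of_real (b x y) * (f x - f y)) summable_on UNIV"
    by (simp add: summable_on_iff_abs_summable_on_complex)
  have "cmod (Lr f x) \<le> (\<Sum>\<^sub>\<infinity>y. cmod (complex_of_real (b x y) * (f x - f y)))"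
    unfolding Lr_def by (rule norm_infsum_bound[OF A])
  also have "\<dots> \<le> (\<Sum>\<^sub>\<infinity>y. b x y * cmod (f x) + b x y * cmod (f y))"
    by (rule infsum_mono[OF A S le])
  also have "\<dots> = deg x * cmod (f x) + (\<Sum>\<^sub>\<infinity>y. b x y * cmod (f y))"
    using b_summ row_abs_summ[OF f]
    by (subst infsum_add) (auto intro: summable_on_cmult_left simp: infsum_cmult_left' deg_def)
  finally show "cmod (Lr f x) \<le> deg x * cmod (f x) + (\<Sum>\<^sub>\<infinity>y. b x y * cmod (f y))" .
qed

lemma T_summ:
  assumes f: "f \<in> ell2 m A"
  shows "(\<lambda>x. \<Sum>\<^sub>\<infinity>y. b x y * (cmod (f y))\<^sup>2) summable_on UNIV"
    and "(\<Sum>\<^sub>\<infinity>x. \<Sum>\<^sub>\<infinity>y. b x y * (cmod (f y))\<^sup>2) \<le> dd * (l2norm m f)\<^sup>2"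
proof -
  have P: "(\<lambda>(x,y). b x y * (cmod (f y))\<^sup>2) summable_on UNIV"
    by (rule pair_summ2) (use deg_ell2[OF f] in auto)
  then have P': "(\<lambda>(x,y). b x y * (cmod (f y))\<^sup>2) summable_on Sigma UNIV (\<lambda>_. UNIV)" by simp
  show "(\<lambda>x. \<Sum>\<^sub>\<infinity>y. b x y * (cmod (f y))\<^sup>2) summable_on UNIV"
    using summable_on_Sigma_banach[OF P'] by simp
  have "(\<Sum>\<^sub>\<infinity>x. \<Sum>\<^sub>\<infinity>y. b x y * (cmod (f y))\<^sup>2) = (\<Sum>\<^sub>\<infinity>(x,y). b x y * (cmod (f y))\<^sup>2)"
    using infsum_Sigma'_banach[OF P'] by simp
  also have "\<dots> = (\<Sum>\<^sub>\<infinity>x. deg x * (cmod (f x))\<^sup>2)"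
    by (rule pair_sum_eq2) (use deg_ell2[OF f] in auto)
  also have "\<dots> \<le> dd * (l2norm m f)\<^sup>2" by (rule deg_ell2(2)[OF f])
  finally show "(\<Sum>\<^sub>\<infinity>x. \<Sum>\<^sub>\<infinity>y. b x y * (cmod (f y))\<^sup>2) \<le> dd * (l2norm m f)\<^sup>2" .
qed

lemma lap_ell2:
  assumes f: "f \<in> ell2 m A"
  shows "laplacian b m f \<in> ell2 m UNIV" and "l2norm m (laplacian b m f) \<le> 2 * dd * l2norm m f"
proof -
  define T where "T x = (\<Sum>\<^sub>\<infinity>y. b x y * (cmod (f y))\<^sup>2)" for x
  define S where "S x = (\<Sum>\<^sub>\<infinity>y. b x y * cmod (f y))" for x
  have Tnn: "T x \<ge> 0" for x unfolding T_def by (intro infsum_nonneg) (simp add: b_nn)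
  have Snn: "S x \<ge> 0" for x unfolding S_def by (intro infsum_nonneg) (simp add: b_nn)
  have pw: "nsq (laplacian b m f) x \<le> 2 * dd\<^sup>2 * nsq f x + 2 * dd * T x" for x
  proof -
    have mp: "m x > 0" by (rule m_pos)
    have n1: "nsq (laplacian b m f) x = (cmod (Lr f x))\<^sup>2 / m x"
      using mp by (simp add: nsq_def lap_eq norm_divide power2_eq_square)
    have "cmod (Lr f x) \<le> deg x * cmod (f x) + S x" using row_summ(2)[OF f] by (simp add: S_def)
    then have "(cmod (Lr f x))\<^sup>2 \<le> (deg x * cmod (f x) + S x)\<^sup>2"
      by (intro power_mono) auto
    also have "\<dots> \<le> 2 * (deg x * cmod (f x))\<^sup>2 + 2 * (S x)\<^sup>2"
      using sum_squares_ge_zero[of "deg x * cmod (f x) - S x" 0] by (simp add: power2_eq_square algebra_simps)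
    also have "\<dots> \<le> 2 * (deg x * cmod (f x))\<^sup>2 + 2 * (deg x * T x)"
      using row_abs_cs[OF f, of x] by (simp add: S_def T_def)
    finally have A: "(cmod (Lr f x))\<^sup>2 \<le> 2 * (deg x * cmod (f x))\<^sup>2 + 2 * (deg x * T x)" .
    have d1: "(deg x)\<^sup>2 \<le> (dd * m x)\<^sup>2" using deg_le deg_nn by (intro power_mono) auto
    have B1: "(deg x * cmod (f x))\<^sup>2 / m x \<le> dd\<^sup>2 * nsq f x"
    proof -
      have "(deg x * cmod (f x))\<^sup>2 \<le> (dd * m x)\<^sup>2 * (cmod (f x))\<^sup>2"
        using mult_right_mono[OF d1, of "(cmod (f x))\<^sup>2"] by (simp add: power_mult_distrib)
      then show ?thesis using mp by (simp add: divide_le_eq nsq_def power2_eq_square algebra_simps)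
    qed
    have B2: "deg x * T x / m x \<le> dd * T x"
      using mult_right_mono[OF deg_le[of x] Tnn[of x]] mp by (simp add: divide_le_eq algebra_simps)
    have "nsq (laplacian b m f) x \<le> (2 * (deg x * cmod (f x))\<^sup>2 + 2 * (deg x * T x)) / m x"
      unfolding n1 using A mp by (simp add: divide_right_mono)
    also have "\<dots> = 2 * ((deg x * cmod (f x))\<^sup>2 / m x) + 2 * (deg x * T x / m x)"
      by (simp add: add_divide_distrib)
    also have "\<dots> \<le> 2 * dd\<^sup>2 * nsq f x + 2 * dd * T x" using B1 B2 by simp
    finally show ?thesis .
  qed
  have TS: "T summable_on UNIV" unfolding T_def by (rule T_summ(1)[OF f])
  have S2: "(\<lambda>x. 2 * dd\<^sup>2 * nsq f x + 2 * dd * T x) summable_on UNIV"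
    using TS ell2_summ[OF f] by (intro summable_on_add summable_on_cmult_right) auto
  have NS: "nsq (laplacian b m f) summable_on UNIV"
    by (rule summable_on_comparison_test[OF S2 pw]) (simp add: nsq_nn)
  then show "laplacian b m f \<in> ell2 m UNIV" by (simp add: ell2_iff)
  have "(l2norm m (laplacian b m f))\<^sup>2 \<le> (\<Sum>\<^sub>\<infinity>x. 2 * dd\<^sup>2 * nsq f x + 2 * dd * T x)"
    unfolding l2norm_sq by (rule infsum_mono[OF NS S2 pw])
  also have "\<dots> = 2 * dd\<^sup>2 * (l2norm m f)\<^sup>2 + 2 * dd * (\<Sum>\<^sub>\<infinity>x. T x)"
    using TS ell2_summ[OF f]
    by (subst infsum_add) (auto intro!: summable_on_cmult_right simp: infsum_cmult_right' l2norm_sq)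
  also have "\<dots> \<le> 2 * dd\<^sup>2 * (l2norm m f)\<^sup>2 + 2 * dd * (dd * (l2norm m f)\<^sup>2)"
    using T_summ(2)[OF f] dd_nn unfolding T_def by (intro add_left_mono mult_left_mono) auto
  also have "\<dots> = (2 * dd * l2norm m f)\<^sup>2" by (simp add: power2_eq_square algebra_simps)
  finally show "l2norm m (laplacian b m f) \<le> 2 * dd * l2norm m f"
    using dd_nn l2norm_nn by (meson mult_nonneg_nonneg power2_le_imp_le zero_le_numeral)
qed


lemma ab_le: "cmod u * cmod v \<le> (cmod u)\<^sup>2 + (cmod v)\<^sup>2"
proof -
  have "2 * (cmod u * cmod v) \<le> (cmod u)\<^sup>2 + (cmod v)\<^sup>2"
    using sum_squares_ge_zero[of "cmod u - cmod v" 0] by (simp add: power2_eq_square algebra_simps)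
  moreover have "0 \<le> cmod u * cmod v" by simp
  ultimately show ?thesis by linarith
qed

lemma green:
  assumes f: "f \<in> ell2 m UNIV" and g: "g \<in> ell2 m UNIV"
  shows "energy b f g = l2inner m (laplacian b m f) g"
proof -
  define Q where "Q = (\<lambda>(x,y). complex_of_real (b x y) * (f x - f y) * cnj (g x))"
  define B where "B = (\<lambda>(x,y). b x y * (cmod (f x))\<^sup>2 + 2 * (b x y * (cmod (g x))\<^sup>2) + b x y * (cmod (f y))\<^sup>2)"
  have Bs: "B summable_on UNIV"
  proof -
    have "(\<lambda>(x,y). b x y * (cmod (f x))\<^sup>2) summable_on UNIV" "(\<lambda>(x,y). b x y * (cmod (g x))\<^sup>2) summable_on UNIV"
         "(\<lambda>(x,y). b x y * (cmod (f y))\<^sup>2) summable_on UNIV"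
      using pair_summ1 pair_summ2 deg_ell2(1)[OF f] deg_ell2(1)[OF g] by auto
    then have "(\<lambda>p. (\<lambda>(x,y). b x y * (cmod (f x))\<^sup>2) p + 2 * (\<lambda>(x,y). b x y * (cmod (g x))\<^sup>2) p + (\<lambda>(x,y). b x y * (cmod (f y))\<^sup>2) p) summable_on UNIV"
      by (intro summable_on_add summable_on_cmult_right)
    then show ?thesis unfolding B_def by (simp add: case_prod_unfold)
  qed
  have Qle: "cmod (Q p) \<le> B p" for p
  proof (cases p)
    case (Pair x y)
    have "cmod (Q p) = b x y * cmod (f x - f y) * cmod (g x)" by (simp add: Q_def Pair norm_mult b_nn)
    also have "\<dots> \<le> b x y * (cmod (f x) + cmod (f y)) * cmod (g x)"
      by (intro mult_right_mono mult_left_mono norm_triangle_ineq4 b_nn) auto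
    also have "\<dots> = b x y * (cmod (f x) * cmod (g x)) + b x y * (cmod (f y) * cmod (g x))"
      by (simp add: algebra_simps)
    also have "\<dots> \<le> b x y * ((cmod (f x))\<^sup>2 + (cmod (g x))\<^sup>2) + b x y * ((cmod (f y))\<^sup>2 + (cmod (g x))\<^sup>2)"
      by (intro add_mono mult_left_mono ab_le b_nn)
    also have "\<dots> = B p" by (simp add: B_def Pair algebra_simps)
    finally show ?thesis .
  qed
  have Qs: "Q summable_on UNIV"
    unfolding summable_on_iff_abs_summable_on_complex
    by (rule summable_on_comparison_test[OF Bs Qle]) simp
  have Qs': "(\<lambda>(x,y). Q (y,x)) summable_on UNIV"
    using Qs summable_on_swap[of Q UNIV UNIV] by simp
  have Qsw: "(\<Sum>\<^sub>\<infinity>(x,y). Q (y,x)) = (\<Sum>\<^sub>\<infinity>p. Q p)"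
  proof -
    have "(Q has_sum (\<Sum>\<^sub>\<infinity>p. Q p)) (UNIV \<times> UNIV)" using Qs by simp
    then have "((\<lambda>(x,y). Q (y,x)) has_sum (\<Sum>\<^sub>\<infinity>p. Q p)) (UNIV \<times> UNIV)"
      by (subst (asm) has_sum_swap)
    then show ?thesis by (simp add: infsumI)
  qed
  have PQ: "complex_of_real (b x y) * (f x - f y) * cnj (g x - g y) = Q (x,y) + Q (y,x)" for x y
    by (simp add: Q_def b_sym[of y x] algebra_simps)
  have "energy b f g = (1/2) * (\<Sum>\<^sub>\<infinity>(x,y). Q (x,y) + Q (y,x))"
    unfolding energy_def PQ ..
  also have "(\<Sum>\<^sub>\<infinity>(x,y). Q (x,y) + Q (y,x)) = (\<Sum>\<^sub>\<infinity>p. Q p) + (\<Sum>\<^sub>\<infinity>(x,y). Q (y,x))"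
  proof -
    have "(\<Sum>\<^sub>\<infinity>(x,y). Q (x,y) + Q (y,x)) = (\<Sum>\<^sub>\<infinity>p. Q p + (\<lambda>(x,y). Q (y,x)) p)"
      by (simp add: case_prod_unfold)
    also have "\<dots> = (\<Sum>\<^sub>\<infinity>p. Q p) + (\<Sum>\<^sub>\<infinity>p. (\<lambda>(x,y). Q (y,x)) p)"
      by (rule infsum_add[OF Qs Qs'])
    finally show ?thesis by simp
  qed
  finally have E: "energy b f g = (\<Sum>\<^sub>\<infinity>p. Q p)" using Qsw by simp
  have QS: "(\<lambda>(x,y). Q (x,y)) summable_on Sigma UNIV (\<lambda>_. UNIV)" using Qs by simp
  have "(\<Sum>\<^sub>\<infinity>p. Q p) = (\<Sum>\<^sub>\<infinity>x. \<Sum>\<^sub>\<infinity>y. Q (x,y))"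
    using infsum_Sigma'_banach[OF QS] by simp
  also have "\<dots> = (\<Sum>\<^sub>\<infinity>x. laplacian b m f x * cnj (g x) * complex_of_real (m x))"
  proof (rule infsum_cong)
    fix x
    have "(\<Sum>\<^sub>\<infinity>y. Q (x,y)) = Lr f x * cnj (g x)"
      unfolding Q_def Lr_def by (simp add: infsum_cmult_left')
    also have "\<dots> = laplacian b m f x * cnj (g x) * complex_of_real (m x)"
      using m_pos[of x] by (simp add: lap_eq)
    finally show "(\<Sum>\<^sub>\<infinity>y. Q (x,y)) = laplacian b m f x * cnj (g x) * complex_of_real (m x)" .
  qed
  finally show ?thesis using E by (simp add: l2inner_def)
qed


lemma infsum_single: "(\<Sum>\<^sub>\<infinity>y. if y = x then (c::'c::{comm_monoid_add,t2_space}) else 0) = c"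
proof -
  have "(\<Sum>\<^sub>\<infinity>y. if y = x then c else 0) = (\<Sum>\<^sub>\<infinity>y\<in>{x}. if y = x then c else 0)"
    by (rule infsum_cong_neutral) auto
  then show ?thesis by simp
qed

definition Aop where "Aop \<Omega> f = (\<lambda>x. if x \<in> \<Omega> then laplacian b m f x else 0)"
definition dlt where "dlt x = (\<lambda>y. if y = x then (1::complex) else 0)"

lemma dlt_ell2: "x \<in> \<Omega> \<Longrightarrow> dlt x \<in> ell2 m \<Omega>"
proof -
  assume x: "x \<in> \<Omega>"
  have "nsq (dlt x) summable_on UNIV"
    by (rule finite_nonzero_values_imp_summable_on) (rule finite_subset[of _ "{x}"], auto simp: nsq_def dlt_def)
  then show ?thesis using x by (auto simp: ell2_iff dlt_def)
qed

lemma ip_dlt: "l2inner m u (dlt x) = u x * complex_of_real (m x)"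
proof -
  have "l2inner m u (dlt x) = (\<Sum>\<^sub>\<infinity>y. if y = x then u x * complex_of_real (m x) else 0)"
    unfolding l2inner_def dlt_def by (rule infsum_cong) auto
  then show ?thesis by (simp add: infsum_single)
qed

lemma ip_unique:
  assumes u: "u \<in> ell2 m \<Omega>" and v: "v \<in> ell2 m \<Omega>" and e: "\<And>g. g \<in> ell2 m \<Omega> \<Longrightarrow> l2inner m u g = l2inner m v g"
  shows "u = v"
proof
  fix x show "u x = v x"
  proof (cases "x \<in> \<Omega>")
    case True
    have "u x * complex_of_real (m x) = v x * complex_of_real (m x)"
      using e[OF dlt_ell2[OF True]] by (simp add: ip_dlt)
    then show ?thesis using m_pos[of x] by simp
  next
    case False then show ?thesis using u v by (simp add: ell2_iff)
  qed
qed

lemma Aop_ell2: "f \<in> ell2 m \<Omega> \<Longrightarrow> Aop \<Omega> f \<in> ell2 m \<Omega> \<and> l2norm m (Aop \<Omega> f) \<le> 2 * dd * l2norm m f"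
proof -
  assume f: "f \<in> ell2 m \<Omega>"
  have le: "nsq (Aop \<Omega> f) x \<le> nsq (laplacian b m f) x" for x by (simp add: Aop_def nsq_def nsq_nn)
  have S: "nsq (laplacian b m f) summable_on UNIV" using lap_ell2(1)[OF f] ell2_summ by blast
  have S2: "nsq (Aop \<Omega> f) summable_on UNIV" by (rule summable_on_comparison_test[OF S le nsq_nn])
  have "(l2norm m (Aop \<Omega> f))\<^sup>2 \<le> (l2norm m (laplacian b m f))\<^sup>2"
    unfolding l2norm_sq by (rule infsum_mono[OF S2 S le])
  then have "l2norm m (Aop \<Omega> f) \<le> l2norm m (laplacian b m f)" using l2norm_nn power2_le_imp_le by blast
  then show ?thesis using lap_ell2(2)[OF f] S2 by (auto simp: ell2_iff Aop_def)
qed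

lemma Aop_ip: "f \<in> ell2 m \<Omega> \<Longrightarrow> g \<in> ell2 m \<Omega> \<Longrightarrow> l2inner m (Aop \<Omega> f) g = energy b f g"
proof -
  assume f: "f \<in> ell2 m \<Omega>" and g: "g \<in> ell2 m \<Omega>"
  have "l2inner m (Aop \<Omega> f) g = l2inner m (laplacian b m f) g"
    unfolding l2inner_def Aop_def using g by (intro infsum_cong) (auto simp: ell2_iff)
  also have "\<dots> = energy b f g" using green ell2_UNIV f g by metis
  finally show ?thesis .
qed

lemma DL_eq: "f \<in> ell2 m \<Omega> \<Longrightarrow> dirichlet_laplacian b m \<Omega> f = Aop \<Omega> f"
  unfolding dirichlet_laplacian_def
proof (rule the_equality)
  assume f: "f \<in> ell2 m \<Omega>"
  show "Aop \<Omega> f \<in> ell2 m \<Omega> \<and> (\<forall>g\<in>ell2 m \<Omega>. energy b f g = l2inner m (Aop \<Omega> f) g)"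
    using Aop_ell2[OF f] Aop_ip[OF f] by auto
  fix u assume u: "u \<in> ell2 m \<Omega> \<and> (\<forall>g\<in>ell2 m \<Omega>. energy b f g = l2inner m u g)"
  show "u = Aop \<Omega> f"
    by (rule ip_unique) (use u Aop_ell2[OF f] Aop_ip[OF f] in auto)
qed

lemma Lr_add: "f \<in> ell2 m A \<Longrightarrow> g \<in> ell2 m A \<Longrightarrow> Lr (\<lambda>x. f x + g x) x = Lr f x + Lr g x"
proof -
  assume f: "f \<in> ell2 m A" and g: "g \<in> ell2 m A"
  have e: "(\<lambda>y. complex_of_real (b x y) * ((f x + g x) - (f y + g y))) =
     (\<lambda>y. complex_of_real (b x y) * (f x - f y) + complex_of_real (b x y) * (g x - g y))"
    by (simp add: algebra_simps)
  show ?thesis unfolding Lr_def e by (rule infsum_add[OF row_summ(1)[OF f] row_summ(1)[OF g]])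
qed

lemma Lr_scale: "Lr (\<lambda>x. c * f x) x = c * Lr f x"
  unfolding Lr_def by (subst infsum_cmult_right'[symmetric]) (simp add: algebra_simps)

lemma Aop_add: "f \<in> ell2 m \<Omega> \<Longrightarrow> g \<in> ell2 m \<Omega> \<Longrightarrow> Aop \<Omega> (\<lambda>x. f x + g x) = (\<lambda>x. Aop \<Omega> f x + Aop \<Omega> g x)"
  by (auto simp: Aop_def lap_eq Lr_add add_divide_distrib)

lemma Aop_scale: "Aop \<Omega> (\<lambda>x. c * f x) = (\<lambda>x. c * Aop \<Omega> f x)"
  by (auto simp: Aop_def lap_eq Lr_scale)

lemma energy_sym: "energy b f g = cnj (energy b g f)"
proof -
  have "cnj (\<Sum>\<^sub>\<infinity>(x,y). complex_of_real (b x y) * (g x - g y) * cnj (f x - f y)) =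
        (\<Sum>\<^sub>\<infinity>(x,y). complex_of_real (b x y) * (f x - f y) * cnj (g x - g y))"
    by (subst infsum_cnj[symmetric]) (simp add: case_prod_unfold algebra_simps del: infsum_cnj)
  then show ?thesis by (simp add: energy_def)
qed

definition E2 where "E2 f = (1/2) * (\<Sum>\<^sub>\<infinity>(x,y). b x y * (cmod (f x - f y))\<^sup>2)"

lemma E2_summ: "f \<in> ell2 m A \<Longrightarrow> (\<lambda>(x,y). b x y * (cmod (f x - f y))\<^sup>2) summable_on UNIV"
proof -
  assume f: "f \<in> ell2 m A"
  have "(\<lambda>(x,y). b x y * (cmod (f x))\<^sup>2) summable_on UNIV" "(\<lambda>(x,y). b x y * (cmod (f y))\<^sup>2) summable_on UNIV"
    using pair_summ1 pair_summ2 deg_ell2(1)[OF f] by auto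
  then have S: "(\<lambda>p. 2 * (\<lambda>(x,y). b x y * (cmod (f x))\<^sup>2) p + 2 * (\<lambda>(x,y). b x y * (cmod (f y))\<^sup>2) p) summable_on UNIV"
    by (intro summable_on_add summable_on_cmult_right)
  have le: "(\<lambda>(x,y). b x y * (cmod (f x - f y))\<^sup>2) p \<le> 2 * (\<lambda>(x,y). b x y * (cmod (f x))\<^sup>2) p + 2 * (\<lambda>(x,y). b x y * (cmod (f y))\<^sup>2) p" for p
  proof (cases p)
    case (Pair x y)
    have "(cmod (f x - f y))\<^sup>2 \<le> 2 * (cmod (f x))\<^sup>2 + 2 * (cmod (f y))\<^sup>2"
      using cmod_add_sq[of "f x" "- f y"] by simp
    then have "b x y * (cmod (f x - f y))\<^sup>2 \<le> b x y * (2 * (cmod (f x))\<^sup>2 + 2 * (cmod (f y))\<^sup>2)"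
      by (rule mult_left_mono) (rule b_nn)
    then show ?thesis using Pair by (simp add: algebra_simps)
  qed
  show ?thesis by (rule summable_on_comparison_test[OF S le]) (auto simp: b_nn)
qed

lemma energy_self: "f \<in> ell2 m A \<Longrightarrow> energy b f f = complex_of_real (E2 f) \<and> E2 f \<ge> 0"
proof -
  assume f: "f \<in> ell2 m A"
  have pw: "complex_of_real (b x y) * (f x - f y) * cnj (f x - f y) = complex_of_real (b x y * (cmod (f x - f y))\<^sup>2)" for x y
    by (simp only: of_real_mult complex_norm_square mult.assoc)
  have eq: "(\<lambda>(x,y). complex_of_real (b x y * (cmod (f x - f y))\<^sup>2)) = (\<lambda>p. complex_of_real ((\<lambda>(x,y). b x y * (cmod (f x - f y))\<^sup>2) p))"
    by (auto simp: fun_eq_iff)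
  have "energy b f f = (1/2) * (\<Sum>\<^sub>\<infinity>p. complex_of_real ((\<lambda>(x,y). b x y * (cmod (f x - f y))\<^sup>2) p))"
    unfolding energy_def pw eq ..
  also have "\<dots> = complex_of_real (E2 f)"
    using infsum_of_real_c[OF E2_summ[OF f]] by (simp add: E2_def)
  finally show ?thesis using b_nn by (auto simp: E2_def intro!: infsum_nonneg)
qed


lemma disc:
  fixes a c d :: real
  assumes "a \<ge> 0" "d \<ge> 0" "\<And>s. 0 \<le> a + 2 * s * c + s\<^sup>2 * d"
  shows "c\<^sup>2 \<le> a * d"
proof (cases "d > 0")
  case True
  have "0 \<le> a + 2 * (-c/d) * c + (-c/d)\<^sup>2 * d" by (rule assms(3))
  also have "\<dots> = a - c\<^sup>2 / d" using True by (simp add: power2_eq_square field_simps)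
  finally show ?thesis using True by (simp add: divide_le_eq mult.commute)
next
  case False
  then have d0: "d = 0" using assms(2) by simp
  have "c = 0"
  proof (rule ccontr)
    assume c: "c \<noteq> 0"
    have "0 \<le> a + 2 * (-(a+1)/(2*c)) * c + (-(a+1)/(2*c))\<^sup>2 * d" by (rule assms(3))
    also have "\<dots> = -1" using c d0 by (simp add: field_simps)
    finally show False by simp
  qed
  then show ?thesis using assms by simp
qed

lemma semi_cs:
  assumes Tin: "\<And>f. f \<in> ell2 m \<Omega> \<Longrightarrow> T f \<in> ell2 m \<Omega>"
    and add: "\<And>f g. f \<in> ell2 m \<Omega> \<Longrightarrow> g \<in> ell2 m \<Omega> \<Longrightarrow> T (\<lambda>x. f x + g x) = (\<lambda>x. T f x + T g x)"
    and scale: "\<And>f c. f \<in> ell2 m \<Omega> \<Longrightarrow> T (\<lambda>x. complex_of_real c * f x) = (\<lambda>x. complex_of_real c * T f x)"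
    and sym: "\<And>f g. f \<in> ell2 m \<Omega> \<Longrightarrow> g \<in> ell2 m \<Omega> \<Longrightarrow> l2inner m (T f) g = cnj (l2inner m (T g) f)"
    and pos: "\<And>f. f \<in> ell2 m \<Omega> \<Longrightarrow> Re (l2inner m (T f) f) \<ge> 0"
    and f: "f \<in> ell2 m \<Omega>" and g: "g \<in> ell2 m \<Omega>"
  shows "(Re (l2inner m (T f) g))\<^sup>2 \<le> Re (l2inner m (T f) f) * Re (l2inner m (T g) g)"
proof (rule disc)
  show "Re (l2inner m (T f) f) \<ge> 0" "Re (l2inner m (T g) g) \<ge> 0" using pos f g by auto
  fix s :: real
  define sg where "sg = (\<lambda>x. complex_of_real s * g x)"
  have sgV: "sg \<in> ell2 m \<Omega>" unfolding sg_def by (rule ell2_scale[OF g])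
  have hV: "(\<lambda>x. f x + sg x) \<in> ell2 m \<Omega>" by (rule ell2_add[OF f sgV])
  have Th: "T (\<lambda>x. f x + sg x) = (\<lambda>x. T f x + complex_of_real s * T g x)"
    using add[OF f sgV] scale[OF g] by (simp add: sg_def)
  have U: "\<And>h. h \<in> ell2 m \<Omega> \<Longrightarrow> h \<in> ell2 m UNIV" by (rule ell2_UNIV)
  have fU: "f \<in> ell2 m UNIV" and gU: "g \<in> ell2 m UNIV" and sgU: "sg \<in> ell2 m UNIV"
    and TfU: "T f \<in> ell2 m UNIV" and TgU: "T g \<in> ell2 m UNIV" and sTgU: "(\<lambda>x. complex_of_real s * T g x) \<in> ell2 m UNIV"
    using U f g sgV Tin ell2_scale by blast+
  have "l2inner m (T (\<lambda>x. f x + sg x)) (\<lambda>x. f x + sg x) =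
     l2inner m (T f) f + l2inner m (T f) sg + (l2inner m (\<lambda>x. complex_of_real s * T g x) f + l2inner m (\<lambda>x. complex_of_real s * T g x) sg)"
    unfolding Th using fU sgU TfU sTgU by (simp add: ip_add1 ip_add2 ell2_add)
  also have "\<dots> = l2inner m (T f) f + complex_of_real s * l2inner m (T f) g + complex_of_real s * l2inner m (T g) f
      + complex_of_real (s\<^sup>2) * l2inner m (T g) g"
    unfolding sg_def by (simp add: ip_scale1 ip_scale2 power2_eq_square)
  finally have e: "Re (l2inner m (T (\<lambda>x. f x + sg x)) (\<lambda>x. f x + sg x)) =
      Re (l2inner m (T f) f) + 2 * s * Re (l2inner m (T f) g) + s\<^sup>2 * Re (l2inner m (T g) g)"
    using sym[OF g f] by simp
  show "0 \<le> Re (l2inner m (T f) f) + 2 * s * Re (l2inner m (T f) g) + s\<^sup>2 * Re (l2inner m (T g) g)"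
    using pos[OF hV] e by simp
qed


lemma lin_facts:
  assumes add: "\<And>f g. f \<in> ell2 m \<Omega> \<Longrightarrow> g \<in> ell2 m \<Omega> \<Longrightarrow> T (\<lambda>x. f x + g x) = (\<lambda>x. T f x + T g x)"
    and scale: "\<And>f c. f \<in> ell2 m \<Omega> \<Longrightarrow> T (\<lambda>x. complex_of_real c * f x) = (\<lambda>x. complex_of_real c * T f x)"
    and f: "f \<in> ell2 m \<Omega>" and g: "g \<in> ell2 m \<Omega>"
  shows "T (\<lambda>x. f x - g x) = (\<lambda>x. T f x - T g x)" and "T (\<lambda>x. 0) = (\<lambda>x. 0)"
proof -
  have "T (\<lambda>x. f x + complex_of_real (-1) * g x) = (\<lambda>x. T f x + T (\<lambda>x. complex_of_real (-1) * g x) x)"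
    by (rule add[OF f ell2_scale[OF g]])
  then show "T (\<lambda>x. f x - g x) = (\<lambda>x. T f x - T g x)" using scale[OF g, of "-1"] by simp
  show "T (\<lambda>x. 0) = (\<lambda>x. 0)" using scale[OF f, of 0] by simp
qed

lemma coercive_bij:
  assumes Tin: "\<And>f. f \<in> ell2 m \<Omega> \<Longrightarrow> T f \<in> ell2 m \<Omega>"
    and add: "\<And>f g. f \<in> ell2 m \<Omega> \<Longrightarrow> g \<in> ell2 m \<Omega> \<Longrightarrow> T (\<lambda>x. f x + g x) = (\<lambda>x. T f x + T g x)"
    and scale: "\<And>f c. f \<in> ell2 m \<Omega> \<Longrightarrow> T (\<lambda>x. complex_of_real c * f x) = (\<lambda>x. complex_of_real c * T f x)"
    and sym: "\<And>f g. f \<in> ell2 m \<Omega> \<Longrightarrow> g \<in> ell2 m \<Omega> \<Longrightarrow> l2inner m (T f) g = cnj (l2inner m (T g) f)"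
    and bdd: "\<And>f. f \<in> ell2 m \<Omega> \<Longrightarrow> l2norm m (T f) \<le> K * l2norm m f" and K: "K > 0"
    and coer: "\<And>f. f \<in> ell2 m \<Omega> \<Longrightarrow> \<alpha> * (l2norm m f)\<^sup>2 \<le> Re (l2inner m (T f) f)" and al: "\<alpha> > 0"
  shows "bij_betw T (ell2 m \<Omega>) (ell2 m \<Omega>)"
proof -
  let ?V = "ell2 m \<Omega>"
  have diff: "T (\<lambda>x. f x - g x) = (\<lambda>x. T f x - T g x)" if "f \<in> ?V" "g \<in> ?V" for f g
    by (rule lin_facts(1)[where \<Omega>=\<Omega> and T=T, OF add scale that])
  have inj: "inj_on T ?V"
  proof (rule inj_onI)
    fix f g assume f: "f \<in> ?V" and g: "g \<in> ?V" and e: "T f = T g"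
    have h: "(\<lambda>x. f x - g x) \<in> ?V" by (rule ell2_diff[OF f g])
    have "T (\<lambda>x. f x - g x) = (\<lambda>x. 0)" using diff[OF f g] e by simp
    then have "\<alpha> * (l2norm m (\<lambda>x. f x - g x))\<^sup>2 \<le> 0" using coer[OF h] by (simp add: l2inner_def)
    then have "(l2norm m (\<lambda>x. f x - g x))\<^sup>2 \<le> 0" using al by (simp add: mult_le_0_iff)
    then have "l2norm m (\<lambda>x. f x - g x) = 0" by simp
    then have "(\<lambda>x. f x - g x) = (\<lambda>x. 0)" using norm_zero_iff[OF h] by simp
    then show "f = g" by (simp add: fun_eq_iff)
  qed
  define P where "P h = (\<lambda>x. h x - complex_of_real (1/K) * T h x)" for h
  have PV: "P h \<in> ?V" if "h \<in> ?V" for h unfolding P_def by (rule ell2_diff[OF that ell2_scale[OF Tin[OF that]]])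
  have Padd: "P (\<lambda>x. f x + g x) = (\<lambda>x. P f x + P g x)" if "f \<in> ?V" "g \<in> ?V" for f g
    unfolding P_def using add[OF that] by (simp add: algebra_simps)
  have Pscale: "P (\<lambda>x. complex_of_real c * f x) = (\<lambda>x. complex_of_real c * P f x)" if "f \<in> ?V" for f c
    unfolding P_def using scale[OF that] by (simp add: algebra_simps)
  have PT: "l2inner m (P f) g = l2inner m f g - complex_of_real (1/K) * l2inner m (T f) g" if "f \<in> ?V" "g \<in> ?V" for f g
  proof -
    have "l2inner m (P f) g = l2inner m f g - l2inner m (\<lambda>x. complex_of_real (1/K) * T f x) g"
      unfolding P_def by (rule ip_diff1[OF ell2_UNIV[OF that(1)] ell2_UNIV[OF ell2_scale[OF Tin[OF that(1)]]] ell2_UNIV[OF that(2)]])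
    then show ?thesis by (simp only: ip_scale1)
  qed
  have Psym: "l2inner m (P f) g = cnj (l2inner m (P g) f)" if "f \<in> ?V" "g \<in> ?V" for f g
    using PT[OF that] PT[OF that(2,1)] sym[OF that] ip_cnj[of g f] by simp
  define r where "r = 1 - \<alpha> / K"
  have qb: "0 \<le> Re (l2inner m (P h) h) \<and> Re (l2inner m (P h) h) \<le> r * (l2norm m h)\<^sup>2" if h: "h \<in> ?V" for h
  proof -
    have hU: "h \<in> ell2 m UNIV" using ell2_UNIV h by blast
    have e: "Re (l2inner m (P h) h) = (l2norm m h)\<^sup>2 - Re (l2inner m (T h) h) / K"
      using PT[OF h h] ip_self[OF hU] by simp
    have "Re (l2inner m (T h) h) \<le> cmod (l2inner m (T h) h)" by (rule complex_Re_le_cmod)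
    also have "\<dots> \<le> l2norm m (T h) * l2norm m h" using ip_bound[OF ell2_UNIV[OF Tin[OF h]] hU] .
    also have "\<dots> \<le> K * l2norm m h * l2norm m h" using bdd[OF h] l2norm_nn by (simp add: mult_right_mono)
    finally have u: "Re (l2inner m (T h) h) \<le> K * (l2norm m h)\<^sup>2" by (simp add: power2_eq_square)
    have l: "\<alpha> * (l2norm m h)\<^sup>2 \<le> Re (l2inner m (T h) h)" by (rule coer[OF h])
    have u': "Re (l2inner m (T h) h) / K \<le> (l2norm m h)\<^sup>2" using u K by (simp add: divide_le_eq mult.commute)
    have l': "\<alpha> * (l2norm m h)\<^sup>2 / K \<le> Re (l2inner m (T h) h) / K" using l K by (simp add: divide_right_mono)
    have "(1 - \<alpha> / K) * (l2norm m h)\<^sup>2 = (l2norm m h)\<^sup>2 - \<alpha> * (l2norm m h)\<^sup>2 / K" by (simp add: algebra_simps)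
    then show ?thesis unfolding e r_def using u' l' by linarith
  qed
  have contr: "l2norm m (P h) \<le> r * l2norm m h" if h: "h \<in> ?V" for h
  proof -
    have Ph: "P h \<in> ?V" by (rule PV[OF h])
    have cs: "(Re (l2inner m (P h) (P h)))\<^sup>2 \<le> Re (l2inner m (P h) h) * Re (l2inner m (P (P h)) (P h))"
      by (rule semi_cs[where T=P and \<Omega>=\<Omega>, OF PV Padd Pscale Psym _ h Ph]) (use qb in blast)+
    have e: "Re (l2inner m (P h) (P h)) = (l2norm m (P h))\<^sup>2" using ip_self ell2_UNIV Ph by simp
    have q1: "0 \<le> Re (l2inner m (P h) h)" "Re (l2inner m (P h) h) \<le> r * (l2norm m h)\<^sup>2" using qb[OF h] by auto
    have q2: "0 \<le> Re (l2inner m (P (P h)) (P h))" "Re (l2inner m (P (P h)) (P h)) \<le> r * (l2norm m (P h))\<^sup>2"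
      using qb[OF Ph] by auto
    have rh: "0 \<le> r * l2norm m h"
    proof (cases "l2norm m h = 0")
      case False
      then have "0 < (l2norm m h)\<^sup>2" using l2norm_nn by simp
      moreover from q1 have "0 \<le> r * (l2norm m h)\<^sup>2" by linarith
      ultimately have "0 \<le> r" by (simp add: zero_le_mult_iff)
      then show ?thesis using l2norm_nn by simp
    qed simp
    have mm: "Re (l2inner m (P h) h) * Re (l2inner m (P (P h)) (P h)) \<le> (r * (l2norm m h)\<^sup>2) * (r * (l2norm m (P h))\<^sup>2)"
      by (rule mult_mono) (use q1 q2 in linarith)+
    have "((l2norm m (P h))\<^sup>2)\<^sup>2 \<le> (r * (l2norm m h)\<^sup>2) * (r * (l2norm m (P h))\<^sup>2)"
      using cs mm unfolding e by linarith
    then have A: "(l2norm m (P h))\<^sup>2 * (l2norm m (P h))\<^sup>2 \<le> ((r * l2norm m h)\<^sup>2) * (l2norm m (P h))\<^sup>2"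
      by (simp add: power2_eq_square algebra_simps)
    show ?thesis
    proof (cases "l2norm m (P h) = 0")
      case True then show ?thesis using rh by simp
    next
      case False
      then have "(l2norm m (P h))\<^sup>2 > 0" using l2norm_nn by simp
      then have "(l2norm m (P h))\<^sup>2 \<le> (r * l2norm m h)\<^sup>2" by (rule mult_right_le_imp_le[OF A])
      then show ?thesis using rh by (rule power2_le_imp_le)
    qed
  qed
  have surj: "T ` ?V = ?V"
  proof
    show "T ` ?V \<subseteq> ?V" using Tin by blast
    show "?V \<subseteq> T ` ?V"
    proof
      fix y assume y: "y \<in> ?V"
      interpret M: Metric_space ?V dV by (rule metric_V)
      define \<Phi> where "\<Phi> f = (\<lambda>x. complex_of_real (1/K) * y x + P f x)" for f
      have \<Phi>V: "\<Phi> \<in> ?V \<rightarrow> ?V" unfolding \<Phi>_def using ell2_add[OF ell2_scale[OF y] PV] by blast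
      have \<Phi>d: "dV (\<Phi> f) (\<Phi> g) \<le> r * dV f g" if "f \<in> ?V" "g \<in> ?V" for f g
      proof -
        have "(\<lambda>x. \<Phi> f x - \<Phi> g x) = P (\<lambda>x. f x - g x)"
        proof -
          have "(\<lambda>x. \<Phi> f x - \<Phi> g x) = (\<lambda>x. (f x - g x) - complex_of_real (1/K) * (T f x - T g x))"
            unfolding \<Phi>_def P_def by (simp add: fun_eq_iff algebra_simps)
          also have "\<dots> = P (\<lambda>x. f x - g x)" unfolding P_def diff[OF that] ..
          finally show ?thesis .
        qed
        then show ?thesis unfolding dV_def using contr[OF ell2_diff[OF that]] by simp
      qed
      have ne: "?V \<noteq> {}" using ell2_0 by blast
      have rl: "r < 1" unfolding r_def using K al by simp
      obtain f where f: "f \<in> ?V" "\<Phi> f = f"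
        by (rule M.Banach_fixedpoint_thm[OF mcomplete_V ne \<Phi>V rl \<Phi>d]) blast+
      have "T f = y"
      proof
        fix x
        have "complex_of_real (1/K) * y x + (f x - complex_of_real (1/K) * T f x) = f x"
          using fun_cong[OF f(2), of x] by (simp add: \<Phi>_def P_def)
        then show "T f x = y x" using K by (simp add: field_simps)
      qed
      then show "y \<in> T ` ?V" using f by blast
    qed
  qed
  show ?thesis using inj surj by (simp add: bij_betw_def)
qed


lemma bottom_not_bij:
  assumes Tin: "\<And>f. f \<in> ell2 m \<Omega> \<Longrightarrow> T f \<in> ell2 m \<Omega>"
    and add: "\<And>f g. f \<in> ell2 m \<Omega> \<Longrightarrow> g \<in> ell2 m \<Omega> \<Longrightarrow> T (\<lambda>x. f x + g x) = (\<lambda>x. T f x + T g x)"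
    and scale: "\<And>f c. f \<in> ell2 m \<Omega> \<Longrightarrow> T (\<lambda>x. complex_of_real c * f x) = (\<lambda>x. complex_of_real c * T f x)"
    and sym: "\<And>f g. f \<in> ell2 m \<Omega> \<Longrightarrow> g \<in> ell2 m \<Omega> \<Longrightarrow> l2inner m (T f) g = cnj (l2inner m (T g) f)"
    and bdd: "\<And>f. f \<in> ell2 m \<Omega> \<Longrightarrow> l2norm m (T f) \<le> K * l2norm m f" and K: "K > 0"
    and pos: "\<And>f. f \<in> ell2 m \<Omega> \<Longrightarrow> Re (l2inner m (T f) f) \<ge> 0"
    and approx: "\<And>\<epsilon>. \<epsilon> > 0 \<Longrightarrow> \<exists>f\<in>ell2 m \<Omega>. l2norm m f = 1 \<and> Re (l2inner m (T f) f) < \<epsilon>"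
  shows "\<not> bij_betw T (ell2 m \<Omega>) (ell2 m \<Omega>)"
proof
  let ?V = "ell2 m \<Omega>"
  have stepA: "(l2norm m (T f))\<^sup>2 \<le> K * Re (l2inner m (T f) f)" if f: "f \<in> ?V" for f
  proof -
    have Tf: "T f \<in> ?V" by (rule Tin[OF f])
    have cs: "(Re (l2inner m (T f) (T f)))\<^sup>2 \<le> Re (l2inner m (T f) f) * Re (l2inner m (T (T f)) (T f))"
      by (rule semi_cs[where T=T and \<Omega>=\<Omega>, OF Tin add scale sym pos f Tf])
    have e: "Re (l2inner m (T f) (T f)) = (l2norm m (T f))\<^sup>2" using ip_self ell2_UNIV Tf by simp
    have "Re (l2inner m (T (T f)) (T f)) \<le> cmod (l2inner m (T (T f)) (T f))" by (rule complex_Re_le_cmod)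
    also have "\<dots> \<le> l2norm m (T (T f)) * l2norm m (T f)"
      using ip_bound[OF ell2_UNIV[OF Tin[OF Tf]] ell2_UNIV[OF Tf]] .
    also have "\<dots> \<le> K * l2norm m (T f) * l2norm m (T f)" using bdd[OF Tf] l2norm_nn by (simp add: mult_right_mono)
    finally have u: "Re (l2inner m (T (T f)) (T f)) \<le> K * (l2norm m (T f))\<^sup>2" by (simp add: power2_eq_square)
    have q: "0 \<le> Re (l2inner m (T f) f)" by (rule pos[OF f])
    have "((l2norm m (T f))\<^sup>2)\<^sup>2 \<le> Re (l2inner m (T f) f) * (K * (l2norm m (T f))\<^sup>2)"
      using cs mult_left_mono[OF u q] unfolding e by linarith
    then have A: "(l2norm m (T f))\<^sup>2 * (l2norm m (T f))\<^sup>2 \<le> (K * Re (l2inner m (T f) f)) * (l2norm m (T f))\<^sup>2"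
      by (simp add: power2_eq_square algebra_simps)
    show ?thesis
    proof (cases "l2norm m (T f) = 0")
      case True then show ?thesis using K q by simp
    next
      case False
      then have "(l2norm m (T f))\<^sup>2 > 0" using l2norm_nn by simp
      then show ?thesis by (rule mult_right_le_imp_le[OF A])
    qed
  qed
  have stepB: "\<exists>g\<in>?V. l2norm m g = 1 \<and> l2norm m (T g) < \<epsilon>" if e: "\<epsilon> > 0" for \<epsilon>
  proof -
    obtain f where f: "f \<in> ?V" "l2norm m f = 1" "Re (l2inner m (T f) f) < \<epsilon>\<^sup>2 / K"
      using approx[of "\<epsilon>\<^sup>2 / K"] e K by auto
    have "(l2norm m (T f))\<^sup>2 \<le> K * Re (l2inner m (T f) f)" by (rule stepA[OF f(1)])
    also have "\<dots> < \<epsilon>\<^sup>2" using f(3) K by (simp add: less_divide_eq mult.commute)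
    finally have "l2norm m (T f) < \<epsilon>" using e by (simp add: power2_less_imp_less)
    then show ?thesis using f by blast
  qed
  assume bij: "bij_betw T ?V ?V"
  define S where "S = inv_into ?V T"
  have S_in: "S y \<in> ?V" if "y \<in> ?V" for y
    unfolding S_def by (rule inv_into_into) (use bij that in \<open>simp add: bij_betw_def\<close>)
  have TS: "T (S y) = y" if "y \<in> ?V" for y
    unfolding S_def by (rule f_inv_into_f[where f=T and A="?V"]) (use bij that in \<open>simp add: bij_betw_def\<close>)
  have ST: "S (T x) = x" if "x \<in> ?V" for x
    unfolding S_def by (rule inv_into_f_f) (use bij that in \<open>simp_all add: bij_betw_def\<close>)
  have Sadj: "l2inner m (S y) w = l2inner m y (S w)" if y: "y \<in> ?V" and w: "w \<in> ?V" for y w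
  proof -
    have "l2inner m (S y) w = l2inner m (S y) (T (S w))" using TS[OF w] by simp
    also have "\<dots> = cnj (l2inner m (T (S w)) (S y))" by (rule ip_cnj)
    also have "\<dots> = cnj (cnj (l2inner m (T (S y)) (S w)))" using sym[OF S_in[OF w] S_in[OF y]] by simp
    also have "\<dots> = l2inner m y (S w)" using TS[OF y] by simp
    finally show ?thesis .
  qed
  interpret M: Metric_space ?V dV by (rule metric_V)
  define F where "F n = {y \<in> ?V. l2norm m (S y) \<le> real n}" for n :: nat
  have closed: "closedin M.mtopology (F n)" for n
    unfolding M.metric_closedin_iff_sequentially_closed
  proof (intro conjI allI impI)
    show "F n \<subseteq> ?V" by (auto simp: F_def)
    fix \<sigma> l assume a: "range \<sigma> \<subseteq> F n \<and> limitin M.mtopology \<sigma> l sequentially"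
    then have lV: "l \<in> ?V" and conv: "\<And>\<epsilon>. \<epsilon> > 0 \<Longrightarrow> \<forall>\<^sub>F k in sequentially. \<sigma> k \<in> ?V \<and> dV (\<sigma> k) l < \<epsilon>"
      unfolding M.limitin_metric by auto
    have sF: "\<sigma> k \<in> ?V" "l2norm m (S (\<sigma> k)) \<le> real n" for k using a by (auto simp: F_def)
    define w where "w = S l"
    have wV: "w \<in> ?V" unfolding w_def by (rule S_in[OF lV])
    have SwV: "S w \<in> ?V" by (rule S_in[OF wV])
    have key: "cmod (l2inner m l (S w)) \<le> real n * l2norm m w"
    proof (rule field_le_epsilon)
      fix \<epsilon> :: real assume e: "\<epsilon> > 0"
      have e2: "\<epsilon> / (l2norm m (S w) + 1) > 0" using e l2norm_nn by (simp add: add_nonneg_pos)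
      obtain k where k: "dV (\<sigma> k) l < \<epsilon> / (l2norm m (S w) + 1)"
        using conv[OF e2] by (auto simp: eventually_sequentially)
      have "l2inner m l (S w) = l2inner m (\<sigma> k) (S w) + l2inner m (\<lambda>x. l x - \<sigma> k x) (S w)"
        using ip_diff1[OF ell2_UNIV[OF lV] ell2_UNIV[OF sF(1)[of k]] ell2_UNIV[OF SwV]] by simp
      then have "cmod (l2inner m l (S w)) \<le> cmod (l2inner m (\<sigma> k) (S w)) + cmod (l2inner m (\<lambda>x. l x - \<sigma> k x) (S w))"
        by (simp add: norm_triangle_ineq)
      also have "cmod (l2inner m (\<sigma> k) (S w)) \<le> real n * l2norm m w"
      proof -
        have "cmod (l2inner m (\<sigma> k) (S w)) = cmod (l2inner m (S (\<sigma> k)) w)" using Sadj[OF sF(1) wV] by simp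
        also have "\<dots> \<le> l2norm m (S (\<sigma> k)) * l2norm m w"
          using ip_bound[OF ell2_UNIV[OF S_in[OF sF(1)]] ell2_UNIV[OF wV]] .
        also have "\<dots> \<le> real n * l2norm m w" using sF(2) l2norm_nn by (simp add: mult_right_mono)
        finally show ?thesis .
      qed
      also have "cmod (l2inner m (\<lambda>x. l x - \<sigma> k x) (S w)) \<le> l2norm m (\<lambda>x. l x - \<sigma> k x) * l2norm m (S w)"
        using ip_bound[OF ell2_UNIV[OF ell2_diff[OF lV sF(1)]] ell2_UNIV[OF SwV]] .
      also have "\<dots> \<le> \<epsilon>"
      proof -
        have d: "l2norm m (\<lambda>x. l x - \<sigma> k x) = dV (\<sigma> k) l" unfolding dV_def by (rule norm_minus_comm)
        have "dV (\<sigma> k) l * l2norm m (S w) \<le> \<epsilon> / (l2norm m (S w) + 1) * l2norm m (S w)"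
          by (rule mult_right_mono[OF less_imp_le[OF k] l2norm_nn])
        also have "\<dots> \<le> \<epsilon>" using e l2norm_nn[of "S w"] by (simp add: divide_le_eq)
        finally show ?thesis using d by simp
      qed
      finally show "cmod (l2inner m l (S w)) \<le> real n * l2norm m w + \<epsilon>" by simp
    qed
    have "(l2norm m w)\<^sup>2 = cmod (l2inner m w w)" using ip_self[OF ell2_UNIV[OF wV]] by (simp add: norm_power)
    also have "l2inner m w w = l2inner m l (S w)" unfolding w_def by (rule Sadj[OF lV wV[unfolded w_def]])
    finally have "l2norm m w * l2norm m w \<le> real n * l2norm m w" using key by (simp add: power2_eq_square)
    then have "l2norm m w \<le> real n"
    proof (cases "l2norm m w = 0")
      case False
      then have "l2norm m w > 0" using l2norm_nn[of w] by simp
      then show ?thesis by (rule mult_right_le_imp_le[OF \<open>l2norm m w * l2norm m w \<le> real n * l2norm m w\<close>])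
    qed simp
    then show "l \<in> F n" using lV by (simp add: F_def w_def)
  qed
  have cover: "\<Union> (range F) = ?V"
  proof
    show "\<Union> (range F) \<subseteq> ?V" by (auto simp: F_def)
    show "?V \<subseteq> \<Union> (range F)"
    proof
      fix y assume y: "y \<in> ?V"
      obtain n :: nat where "l2norm m (S y) \<le> real n" using real_arch_simple by blast
      then show "y \<in> \<Union> (range F)" using y by (auto simp: F_def)
    qed
  qed
  have "\<exists>n. M.mtopology interior_of (F n) \<noteq> {}"
  proof (rule ccontr)
    assume "\<not> ?thesis"
    then have "\<And>T. T \<in> range F \<Longrightarrow> closedin M.mtopology T \<and> M.mtopology interior_of T = {}"
      using closed by blast
    then have "M.mtopology interior_of \<Union> (range F) = {}"
      by (rule M.metric_Baire_category_alt[OF mcomplete_V countable_image[OF countableI_type]])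
    moreover have "M.mtopology interior_of ?V = ?V" using interior_of_topspace[of M.mtopology] by simp
    ultimately have "?V = {}" using cover by simp
    then show False using ell2_0[of \<Omega>] by blast
  qed
  then obtain n y0 where y0: "y0 \<in> M.mtopology interior_of (F n)" by blast
  moreover have "openin M.mtopology (M.mtopology interior_of (F n))" by simp
  ultimately obtain r where r: "r > 0" "M.mball y0 r \<subseteq> M.mtopology interior_of (F n)"
    unfolding M.openin_mtopology by blast
  have ballF: "M.mball y0 r \<subseteq> F n" using r(2) interior_of_subset[of M.mtopology "F n"] by blast
  have y0F: "y0 \<in> F n" using y0 interior_of_subset[of M.mtopology "F n"] by blast
  then have y0V: "y0 \<in> ?V" and y0n: "l2norm m (S y0) \<le> real n" by (simp_all add: F_def)
  define c :: real where "c = 2 * real n + 1"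
  have cpos: "c > 0" by (simp add: c_def)
  have rc: "r / c > 0" using r(1) cpos by simp
  obtain g where g: "g \<in> ?V" "l2norm m g = 1" "l2norm m (T g) < r / c"
    using stepB[OF rc] by blast
  define y1 where "y1 = (\<lambda>x. complex_of_real c * T g x)"
  have y1T: "y1 = T (\<lambda>x. complex_of_real c * g x)" unfolding y1_def by (rule scale[OF g(1), symmetric])
  have cgV: "(\<lambda>x. complex_of_real c * g x) \<in> ?V" by (rule ell2_scale[OF g(1)])
  define z where "z = (\<lambda>x. y0 x + y1 x)"
  have y1V: "y1 \<in> ?V" unfolding y1_def by (rule ell2_scale[OF Tin[OF g(1)]])
  have zV: "z \<in> ?V" unfolding z_def by (rule ell2_add[OF y0V y1V])
  have "(\<lambda>x. y0 x - z x) = (\<lambda>x. complex_of_real (-c) * T g x)" unfolding z_def y1_def by (simp add: fun_eq_iff)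
  then have "dV y0 z = l2norm m (\<lambda>x. complex_of_real (-c) * T g x)" unfolding dV_def by simp
  also have "\<dots> = c * l2norm m (T g)" unfolding norm_scale using cpos by simp
  also have "\<dots> < r" using g(3) cpos by (simp add: less_divide_eq mult.commute)
  finally have "z \<in> M.mball y0 r" using y0V zV by simp
  then have "z \<in> F n" using ballF by blast
  then have zF: "l2norm m (S z) \<le> real n" by (simp add: F_def)
  have "T (\<lambda>x. S y0 x + complex_of_real c * g x) = (\<lambda>x. T (S y0) x + T (\<lambda>x. complex_of_real c * g x) x)"
    by (rule add[OF S_in[OF y0V] cgV])
  also have "\<dots> = z" unfolding TS[OF y0V] y1T[symmetric] z_def ..
  finally have Tz: "T (\<lambda>x. S y0 x + complex_of_real c * g x) = z" .
  have Sz: "S z = (\<lambda>x. S y0 x + complex_of_real c * g x)"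
    using ST[OF ell2_add[OF S_in[OF y0V] cgV]] unfolding Tz .
  have "c = l2norm m (\<lambda>x. complex_of_real c * g x)" using norm_scale[of "complex_of_real c" g] g(2) cpos by simp
  also have "(\<lambda>x. complex_of_real c * g x) = (\<lambda>x. S z x - S y0 x)" unfolding Sz by simp
  also have "l2norm m \<dots> \<le> l2norm m (S z) + l2norm m (S y0)"
    by (rule norm_diff[OF ell2_UNIV[OF S_in[OF zV]] ell2_UNIV[OF S_in[OF y0V]]])
  also have "\<dots> \<le> real n + real n" using zF y0n by (rule add_mono)
  finally show False unfolding c_def by simp
qed


fun plen :: "'a list \<Rightarrow> real" where
  "plen (u # v # r) = 1 / b u v + plen (v # r)" | "plen _ = 0"
fun pos_path :: "'a list \<Rightarrow> bool" where
  "pos_path (u # v # r) = (b u v > 0 \<and> pos_path (v # r))" | "pos_path _ = True"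
fun esum :: "('a \<Rightarrow> complex) \<Rightarrow> 'a list \<Rightarrow> real" where
  "esum f (u # v # r) = b u v * (cmod (f u - f v))\<^sup>2 + esum f (v # r)" | "esum f _ = 0"
fun edges :: "'a list \<Rightarrow> ('a \<times> 'a) list" where
  "edges (u # v # r) = (u, v) # edges (v # r)" | "edges _ = []"

lemma path_length_plen: "path_length b p = plen p"
proof (induction p rule: plen.induct)
  case (1 u v r)
  have "path_length b (u # v # r) = (\<Sum>i<Suc (length r). 1 / b ((u # v # r) ! i) ((u # v # r) ! Suc i))"
    by (simp add: path_length_def)
  also have "\<dots> = 1 / b u v + (\<Sum>i<length r. 1 / b ((v # r) ! i) ((v # r) ! Suc i))"
    by (subst sum.lessThan_Suc_shift) simp
  also have "(\<Sum>i<length r. 1 / b ((v # r) ! i) ((v # r) ! Suc i)) = path_length b (v # r)"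
    by (simp add: path_length_def)
  finally show ?case using 1 by simp
qed (auto simp: path_length_def)

lemma pos_path_iff: "pos_path p \<longleftrightarrow> (\<forall>i. Suc i < length p \<longrightarrow> b (p ! i) (p ! Suc i) > 0)"
proof (induction p rule: pos_path.induct)
  case (1 u v r)
  show ?case
  proof
    assume a: "pos_path (u # v # r)"
    show "\<forall>i. Suc i < length (u # v # r) \<longrightarrow> b ((u # v # r) ! i) ((u # v # r) ! Suc i) > 0"
    proof (intro allI impI)
      fix i assume i: "Suc i < length (u # v # r)"
      show "b ((u # v # r) ! i) ((u # v # r) ! Suc i) > 0"
      proof (cases i)
        case 0 then show ?thesis using a by simp
      next
        case (Suc j) then show ?thesis using a 1 i by simp
      qed
    qed
  next
    assume a: "\<forall>i. Suc i < length (u # v # r) \<longrightarrow> b ((u # v # r) ! i) ((u # v # r) ! Suc i) > 0"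
    have "b u v > 0" using a[rule_format, of 0] by simp
    moreover have "\<forall>i. Suc i < length (v # r) \<longrightarrow> b ((v # r) ! i) ((v # r) ! Suc i) > 0"
      using a by (auto dest: spec[of _ "Suc _"])
    ultimately show "pos_path (u # v # r)" using 1 by simp
  qed
qed auto

lemma pos_path_append: "pos_path (xs @ a # ys) \<longleftrightarrow> pos_path (xs @ [a]) \<and> pos_path (a # ys)"
  by (induction xs rule: induct_list012) auto

lemma plen_append: "plen (xs @ a # ys) = plen (xs @ [a]) + plen (a # ys)"
  by (induction xs rule: induct_list012) auto

lemma plen_nn: "pos_path p \<Longrightarrow> plen p \<ge> 0"
  by (induction p rule: plen.induct) auto

lemma esum_nn: "esum f p \<ge> 0"
  by (induction f p rule: esum.induct) (auto simp: b_nn)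

lemma hd_split: "hd (xs @ a # ys) = hd (xs @ [a])" by (cases xs) auto

lemma distinct_reduce:
  "pos_path p \<Longrightarrow> p \<noteq> [] \<Longrightarrow> \<exists>q. pos_path q \<and> q \<noteq> [] \<and> hd q = hd p \<and> last q = last p \<and> distinct q \<and> plen q \<le> plen p"
proof (induction "length p" arbitrary: p rule: less_induct)
  case less
  show ?case
  proof (cases "distinct p")
    case True then show ?thesis using less.prems by blast
  next
    case False
    then obtain xs ys zs a where p: "p = xs @ [a] @ ys @ [a] @ zs" using not_distinct_decomp by blast
    define q0 where "q0 = xs @ a # zs"
    have pp: "pos_path (xs @ [a])" "pos_path (a # ys @ a # zs)"
      using less.prems(1) pos_path_append[of xs a "ys @ a # zs"] p by auto
    have pp2: "pos_path ((a # ys) @ [a])" "pos_path (a # zs)"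
      using pp(2) pos_path_append[of "a # ys" a zs] by auto
    have q0p: "pos_path q0" unfolding q0_def using pos_path_append pp(1) pp2(2) by blast
    have "plen p = plen (xs @ [a]) + plen (a # ys @ a # zs)"
      using p plen_append[of xs a "ys @ a # zs"] by simp
    also have "plen (a # ys @ a # zs) = plen ((a # ys) @ [a]) + plen (a # zs)"
      using plen_append[of "a # ys" a zs] by simp
    finally have "plen q0 \<le> plen p"
      unfolding q0_def using plen_append[of xs a zs] plen_nn[OF pp2(1)] by simp
    moreover have "length q0 < length p" unfolding q0_def p by simp
    moreover have "hd q0 = hd p" unfolding q0_def p using hd_split[of xs a zs] hd_split[of xs a "ys @ [a] @ zs"] by simp
    moreover have "last q0 = last p" unfolding q0_def p by simp
    moreover have "q0 \<noteq> []" unfolding q0_def by simp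
    ultimately show ?thesis using less.hyps[of q0] q0p by fastforce
  qed
qed

lemma two_ab_le:
  fixes \<alpha> \<beta> bb L E :: real
  assumes "\<alpha> \<ge> 0" "\<beta> \<ge> 0" "bb > 0" "L \<ge> 0" "E \<ge> 0" "\<beta>\<^sup>2 \<le> L * E"
  shows "(\<alpha> + \<beta>)\<^sup>2 \<le> (1 / bb + L) * (bb * \<alpha>\<^sup>2 + E)"
proof -
  have key: "2 * \<alpha> * \<beta> \<le> E / bb + L * bb * \<alpha>\<^sup>2"
  proof (cases "L > 0")
    case True
    have t: "L * bb > 0" using True assms by simp
    have "2 * \<alpha> * \<beta> \<le> (L * bb) * \<alpha>\<^sup>2 + \<beta>\<^sup>2 / (L * bb)" by (rule amgm_t[OF t])
    also have "\<beta>\<^sup>2 / (L * bb) \<le> (L * E) / (L * bb)" by (rule divide_right_mono[OF assms(6)]) (use t in simp)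
    also have "(L * E) / (L * bb) = E / bb" using True by simp
    finally show ?thesis by (simp add: algebra_simps)
  next
    case False
    then have "L = 0" using assms by simp
    then have "\<beta> = 0" using assms(6) by simp
    then show ?thesis using assms by simp
  qed
  have "(1 / bb + L) * (bb * \<alpha>\<^sup>2 + E) = \<alpha>\<^sup>2 + E / bb + L * bb * \<alpha>\<^sup>2 + L * E"
    using assms(3) by (simp add: field_simps)
  moreover have "(\<alpha> + \<beta>)\<^sup>2 = \<alpha>\<^sup>2 + 2 * \<alpha> * \<beta> + \<beta>\<^sup>2" by (simp add: power2_eq_square algebra_simps)
  ultimately show ?thesis using key assms(6) by linarith
qed

lemma path_cs: "pos_path p \<Longrightarrow> p \<noteq> [] \<Longrightarrow> (cmod (f (hd p) - f (last p)))\<^sup>2 \<le> plen p * esum f p"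
proof (induction p rule: plen.induct)
  case (1 u v r)
  have bp: "b u v > 0" and pr: "pos_path (v # r)" using 1 by auto
  have IH: "(cmod (f v - f (last (v # r))))\<^sup>2 \<le> plen (v # r) * esum f (v # r)" using 1 pr by simp
  have "cmod (f u - f (last (v # r))) \<le> cmod (f u - f v) + cmod (f v - f (last (v # r)))"
    using norm_triangle_ineq[of "f u - f v" "f v - f (last (v # r))"] by simp
  then have "(cmod (f u - f (last (v # r))))\<^sup>2 \<le> (cmod (f u - f v) + cmod (f v - f (last (v # r))))\<^sup>2"
    by (simp add: power_mono)
  also have "\<dots> \<le> (1 / b u v + plen (v # r)) * (b u v * (cmod (f u - f v))\<^sup>2 + esum f (v # r))"
    by (rule two_ab_le) (use bp plen_nn[OF pr] esum_nn IH in auto)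
  finally show ?case by simp
qed auto

lemma edges_set: "(u, v) \<in> set (edges p) \<Longrightarrow> u \<in> set p \<and> v \<in> set p"
  by (induction p rule: edges.induct) auto

lemma edges_distinct: "distinct p \<Longrightarrow> distinct (edges p)"
  by (induction p rule: edges.induct) (auto dest: edges_set)

lemma edges_antisym: "distinct p \<Longrightarrow> (u, v) \<in> set (edges p) \<Longrightarrow> (v, u) \<notin> set (edges p)"
  by (induction p rule: edges.induct) (auto dest: edges_set)

lemma esum_edges: "esum f p = sum_list (map (\<lambda>(u,v). b u v * (cmod (f u - f v))\<^sup>2) (edges p))"
  by (induction f p rule: esum.induct) auto

lemma esum_le:
  assumes f: "f \<in> ell2 m A" and d: "distinct p"
  shows "esum f p \<le> E2 f"
proof -
  define w where "w = (\<lambda>(u,v). b u v * (cmod (f u - f v))\<^sup>2)"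
  define E where "E = set (edges p)"
  have fin: "finite E" unfolding E_def by simp
  have e1: "esum f p = sum w E"
    unfolding esum_edges E_def w_def by (rule sum_list_distinct_conv_sum_set[OF edges_distinct[OF d]])
  have wsw: "w (prod.swap e) = w e" for e
    by (cases e) (simp add: w_def b_sym norm_minus_commute)
  have e2: "sum w (prod.swap ` E) = sum w E"
    by (subst sum.reindex) (auto simp: wsw inj_on_def)
  have disj: "E \<inter> prod.swap ` E = {}" unfolding E_def using edges_antisym[OF d] by auto
  have u: "sum w (E \<union> prod.swap ` E) = sum w E + sum w (prod.swap ` E)"
    by (rule sum.union_disjoint[OF fin finite_imageI[OF fin] disj])
  have "2 * esum f p = sum w (E \<union> prod.swap ` E)" unfolding u e1 e2 by simp
  also have "\<dots> \<le> (\<Sum>\<^sub>\<infinity>e. w e)"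
    by (rule finite_sum_le_infsum) (use E2_summ[OF f] fin in \<open>auto simp: w_def b_nn\<close>)
  also have "\<dots> = 2 * E2 f" by (simp add: E2_def w_def)
  finally show ?thesis by simp
qed

lemma point_bound:
  assumes f: "f \<in> ell2 m \<Omega>" and y: "y \<notin> \<Omega>" and p: "is_path b p x y"
  shows "(cmod (f x))\<^sup>2 \<le> path_length b p * E2 f"
proof -
  have pp: "pos_path p" "p \<noteq> []" "hd p = x" "last p = y" using p by (auto simp: is_path_def pos_path_iff)
  obtain q where q: "pos_path q" "q \<noteq> []" "hd q = x" "last q = y" "distinct q" "plen q \<le> plen p"
    using distinct_reduce[OF pp(1,2)] pp by auto
  have fy: "f y = 0" using f y by (simp add: ell2_iff)
  have "(cmod (f x))\<^sup>2 = (cmod (f (hd q) - f (last q)))\<^sup>2" using q fy by simp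
  also have "\<dots> \<le> plen q * esum f q" by (rule path_cs[OF q(1,2)])
  also have "\<dots> \<le> plen p * E2 f"
    by (rule mult_mono) (use q esum_le[OF f q(5)] plen_nn[OF pp(1)] esum_nn in auto)
  finally show ?thesis by (simp add: path_length_plen)
qed


lemma vol_fin:
  assumes v: "vol m A < \<infinity>"
  shows "m summable_on A" and "vol m A = ennreal (\<Sum>\<^sub>\<infinity>x\<in>A. m x)" and "enn2real (vol m A) = (\<Sum>\<^sub>\<infinity>x\<in>A. m x)"
proof -
  have vs: "vol m A = (SUP F\<in>{F. finite F \<and> F \<subseteq> A}. ennreal (sum m F))"
  proof -
    have "vol m A = (SUP F\<in>{F. finite F \<and> F \<subseteq> A}. sum (\<lambda>x. ennreal (m x)) F)"
      unfolding vol_def by (rule nonneg_infsum_complete) simp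
    also have "\<dots> = (SUP F\<in>{F. finite F \<and> F \<subseteq> A}. ennreal (sum m F))"
      by (rule SUP_cong) (auto intro!: sum_ennreal)
    finally show ?thesis .
  qed
  have fs: "sum m F \<le> enn2real (vol m A)" if "finite F" "F \<subseteq> A" for F
  proof -
    have "ennreal (sum m F) \<le> vol m A" unfolding vs by (rule SUP_upper) (use that in auto)
    then have "enn2real (ennreal (sum m F)) \<le> enn2real (vol m A)" using v by (intro enn2real_mono) auto
    then show ?thesis by (simp add: sum_nonneg)
  qed
  show S: "m summable_on A"
    by (rule nonneg_bdd_above_summable_on) (use fs in \<open>auto intro!: bdd_aboveI[of _ "enn2real (vol m A)"]\<close>)
  have "ennreal (\<Sum>\<^sub>\<infinity>x\<in>A. m x) = (SUP F\<in>{F. finite F \<and> F \<subseteq> A}. ennreal (sum m F))"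
    by (rule infsum_nonneg_is_SUPREMUM_ennreal[OF S]) simp
  then show V: "vol m A = ennreal (\<Sum>\<^sub>\<infinity>x\<in>A. m x)" using vs by simp
  show "enn2real (vol m A) = (\<Sum>\<^sub>\<infinity>x\<in>A. m x)" unfolding V by (simp add: infsum_nonneg)
qed

lemma inr_nn: "real_of_ereal (inradius b \<Omega>) \<ge> 0"
proof (cases "{ereal r | r. r > 0 \<and> (\<exists>x\<in>\<Omega>. gball b x r \<subseteq> \<Omega>)} = {}")
  case True
  have "inradius b \<Omega> = Sup {}" unfolding inradius_def True ..
  then show ?thesis by (simp add: bot_ereal_def)
next
  case False
  then obtain r where r: "r > 0" "ereal r \<in> {ereal r | r. r > 0 \<and> (\<exists>x\<in>\<Omega>. gball b x r \<subseteq> \<Omega>)}" by blast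
  have "ereal r \<le> inradius b \<Omega>" unfolding inradius_def by (rule Sup_upper[OF r(2)])
  then have "0 \<le> inradius b \<Omega>" using r(1) by (metis ereal_less_eq(5) less_imp_le order_trans zero_ereal_def)
  then show ?thesis by (rule real_of_ereal_pos)
qed

lemma exit_point:
  assumes x: "x \<in> \<Omega>" and e: "\<epsilon> > 0" and fin: "inradius b \<Omega> < \<infinity>"
  shows "\<exists>y. y \<notin> \<Omega> \<and> gdist b x y < real_of_ereal (inradius b \<Omega>) + \<epsilon>"
proof (rule ccontr)
  define R where "R = real_of_ereal (inradius b \<Omega>)"
  assume "\<not> ?thesis"
  then have "gball b x (R + \<epsilon>) \<subseteq> \<Omega>" by (auto simp: gball_def R_def)
  moreover have "R + \<epsilon> > 0" using inr_nn[of \<Omega>] e by (simp add: R_def)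
  ultimately have "ereal (R + \<epsilon>) \<in> {ereal r | r. r > 0 \<and> (\<exists>x\<in>\<Omega>. gball b x r \<subseteq> \<Omega>)}" using x by blast
  then have le: "ereal (R + \<epsilon>) \<le> inradius b \<Omega>" unfolding inradius_def by (rule Sup_upper)
  then have "inradius b \<Omega> \<noteq> - \<infinity>" by auto
  then have "inradius b \<Omega> = ereal R" using fin by (cases "inradius b \<Omega>") (auto simp: R_def)
  then show False using le e by simp
qed

lemma short_path:
  assumes conn: "graph_connected b" and "gdist b x y < a"
  shows "\<exists>p. is_path b p x y \<and> path_length b p < a"
proof -
  have ne: "{path_length b p | p. is_path b p x y} \<noteq> {}" using conn by (auto simp: graph_connected_def)
  from cInf_lessD[OF ne] assms(2) show ?thesis unfolding gdist_def by blast
qed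

lemma le_eps_mult:
  fixes a r e :: real
  assumes "e \<ge> 0" "\<And>\<epsilon>. \<epsilon> > 0 \<Longrightarrow> a \<le> (r + \<epsilon>) * e"
  shows "a \<le> r * e"
proof (rule field_le_epsilon)
  fix \<epsilon> :: real assume ep: "\<epsilon> > 0"
  have p: "\<epsilon> / (e + 1) > 0" using ep assms(1) by simp
  have "a \<le> (r + \<epsilon> / (e + 1)) * e" by (rule assms(2)[OF p])
  also have "\<dots> = r * e + \<epsilon> * (e / (e + 1))" by (simp add: algebra_simps)
  also have "\<epsilon> * (e / (e + 1)) \<le> \<epsilon> * 1" using ep assms(1) by (intro mult_left_mono) auto
  finally show "a \<le> r * e + \<epsilon>" by simp
qed

lemma rayleigh_lower:
  assumes conn: "graph_connected b" and fin: "inradius b \<Omega> < \<infinity>" and vf: "vol m \<Omega> < \<infinity>"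
    and f: "f \<in> ell2 m \<Omega>"
  shows "1 / (real_of_ereal (inradius b \<Omega>) * enn2real (vol m \<Omega>)) * (l2norm m f)\<^sup>2 \<le> E2 f"
proof -
  define R where "R = real_of_ereal (inradius b \<Omega>)"
  have E0: "E2 f \<ge> 0" using energy_self[OF f] by simp
  have pt: "(cmod (f x))\<^sup>2 \<le> R * E2 f" if x: "x \<in> \<Omega>" for x
  proof (rule le_eps_mult[OF E0])
    fix \<epsilon> :: real assume e: "\<epsilon> > 0"
    obtain y where y: "y \<notin> \<Omega>" "gdist b x y < R + \<epsilon>" using exit_point[OF x e fin] by (auto simp: R_def)
    obtain p where p: "is_path b p x y" "path_length b p < R + \<epsilon>" using short_path[OF conn y(2)] by blast
    have "(cmod (f x))\<^sup>2 \<le> path_length b p * E2 f" by (rule point_bound[OF f y(1) p(1)])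
    also have "\<dots> \<le> (R + \<epsilon>) * E2 f" using p(2) E0 by (simp add: mult_right_mono)
    finally show "(cmod (f x))\<^sup>2 \<le> (R + \<epsilon>) * E2 f" .
  qed
  have mS: "m summable_on \<Omega>" by (rule vol_fin(1)[OF vf])
  have "(l2norm m f)\<^sup>2 = (\<Sum>\<^sub>\<infinity>x\<in>\<Omega>. nsq f x)"
    unfolding l2norm_sq by (rule infsum_cong_neutral) (use f in \<open>auto simp: ell2_iff nsq_def\<close>)
  also have "\<dots> \<le> (\<Sum>\<^sub>\<infinity>x\<in>\<Omega>. (R * E2 f) * m x)"
  proof (rule infsum_mono)
    show "nsq f summable_on \<Omega>" using ell2_summ[OF f] by (rule summable_on_subset) simp
    show "(\<lambda>x. (R * E2 f) * m x) summable_on \<Omega>" by (rule summable_on_cmult_right[OF mS])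
    fix x assume "x \<in> \<Omega>"
    then show "nsq f x \<le> (R * E2 f) * m x" unfolding nsq_def using pt by (intro mult_right_mono) auto
  qed
  also have "\<dots> = R * E2 f * enn2real (vol m \<Omega>)" by (simp add: infsum_cmult_right' vol_fin(3)[OF vf])
  finally have main: "(l2norm m f)\<^sup>2 \<le> R * enn2real (vol m \<Omega>) * E2 f" by (simp add: algebra_simps)
  show ?thesis
  proof (cases "R * enn2real (vol m \<Omega>) = 0")
    case True
    then have z: "1 / (R * enn2real (vol m \<Omega>)) * (l2norm m f)\<^sup>2 = 0" by simp
    show ?thesis using z E0 unfolding R_def by linarith
  next
    case False
    have "R * enn2real (vol m \<Omega>) \<ge> 0" using inr_nn[of \<Omega>] by (simp add: R_def)
    then have pos: "R * enn2real (vol m \<Omega>) > 0" using False by linarith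
    have "(l2norm m f)\<^sup>2 / (R * enn2real (vol m \<Omega>)) \<le> E2 f"
      using main pos by (simp add: divide_le_eq mult.commute)
    then show ?thesis by (simp add: R_def)
  qed
qed


lemma E2_cong: "(\<And>x y. g x - g y = h x - h y) \<Longrightarrow> E2 g = E2 h"
  unfolding E2_def by simp

lemma E2_scale: "E2 (\<lambda>x. c * f x) = (cmod c)\<^sup>2 * E2 f"
proof -
  have "(\<lambda>(x,y). b x y * (cmod (c * f x - c * f y))\<^sup>2) = (\<lambda>p. (cmod c)\<^sup>2 * (\<lambda>(x,y). b x y * (cmod (f x - f y))\<^sup>2) p)"
    by (auto simp: fun_eq_iff right_diff_distrib[symmetric] norm_mult power_mult_distrib)
  then show ?thesis unfolding E2_def by (simp add: infsum_cmult_right')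
qed

definition Tt where "Tt \<Omega> t = (\<lambda>f x. Aop \<Omega> f x - complex_of_real t * f x)"

lemma Tt_in: "f \<in> ell2 m \<Omega> \<Longrightarrow> Tt \<Omega> t f \<in> ell2 m \<Omega>"
  unfolding Tt_def using Aop_ell2 ell2_diff ell2_scale by blast

lemma Tt_add: "f \<in> ell2 m \<Omega> \<Longrightarrow> g \<in> ell2 m \<Omega> \<Longrightarrow> Tt \<Omega> t (\<lambda>x. f x + g x) = (\<lambda>x. Tt \<Omega> t f x + Tt \<Omega> t g x)"
  unfolding Tt_def by (simp add: Aop_add algebra_simps)

lemma Tt_scale: "Tt \<Omega> t (\<lambda>x. complex_of_real c * f x) = (\<lambda>x. complex_of_real c * Tt \<Omega> t f x)"
  unfolding Tt_def by (simp add: Aop_scale algebra_simps)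

lemma Tt_ip: "f \<in> ell2 m \<Omega> \<Longrightarrow> g \<in> ell2 m \<Omega> \<Longrightarrow> l2inner m (Tt \<Omega> t f) g = energy b f g - complex_of_real t * l2inner m f g"
proof -
  assume f: "f \<in> ell2 m \<Omega>" and g: "g \<in> ell2 m \<Omega>"
  have "l2inner m (Tt \<Omega> t f) g = l2inner m (Aop \<Omega> f) g - l2inner m (\<lambda>x. complex_of_real t * f x) g"
    unfolding Tt_def
    by (rule ip_diff1[OF ell2_UNIV[OF conjunct1[OF Aop_ell2[OF f]]] ell2_UNIV[OF ell2_scale[OF f]] ell2_UNIV[OF g]])
  then show ?thesis using Aop_ip[OF f g] by (simp add: ip_scale1)
qed

lemma Tt_sym: "f \<in> ell2 m \<Omega> \<Longrightarrow> g \<in> ell2 m \<Omega> \<Longrightarrow> l2inner m (Tt \<Omega> t f) g = cnj (l2inner m (Tt \<Omega> t g) f)"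
  using Tt_ip[of f \<Omega> g t] Tt_ip[of g \<Omega> f t] energy_sym[of f g] ip_cnj[of f g] by simp

lemma Tt_Re: "f \<in> ell2 m \<Omega> \<Longrightarrow> Re (l2inner m (Tt \<Omega> t f) f) = E2 f - t * (l2norm m f)\<^sup>2"
  using Tt_ip[of f \<Omega> f t] energy_self[of f \<Omega>] ip_self[OF ell2_UNIV, of f \<Omega>] by simp

lemma Tt_bdd: "f \<in> ell2 m \<Omega> \<Longrightarrow> l2norm m (Tt \<Omega> t f) \<le> (2 * dd + \<bar>t\<bar> + 1) * l2norm m f"
proof -
  assume f: "f \<in> ell2 m \<Omega>"
  have "l2norm m (Tt \<Omega> t f) \<le> l2norm m (Aop \<Omega> f) + l2norm m (\<lambda>x. complex_of_real t * f x)"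
    unfolding Tt_def by (rule norm_diff[OF ell2_UNIV[OF conjunct1[OF Aop_ell2[OF f]]] ell2_UNIV[OF ell2_scale[OF f]]])
  also have "\<dots> \<le> 2 * dd * l2norm m f + \<bar>t\<bar> * l2norm m f" using Aop_ell2[OF f] by (simp add: norm_scale)
  also have "\<dots> \<le> (2 * dd + \<bar>t\<bar> + 1) * l2norm m f" using l2norm_nn[of f] by (simp add: algebra_simps)
  finally show ?thesis .
qed

lemma K_pos: "2 * dd + \<bar>t\<bar> + 1 > 0" using dd_nn by simp

lemma lap_zero: "laplacian b m (\<lambda>x. 0) = (\<lambda>x. 0)"
  by (simp add: fun_eq_iff lap_eq Lr_def)

lemma lapnorm_bound:
  assumes f: "f \<in> ell2 m UNIV"
  shows "l2norm m (laplacian b m f) \<le> laplacian_norm b m * l2norm m f"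
proof (cases "l2norm m f = 0")
  case True
  then have "f = (\<lambda>x. 0)" using norm_zero_iff[OF f] by simp
  then show ?thesis by (simp add: lap_zero l2norm_def)
next
  case False
  define n where "n = l2norm m f"
  have np: "n > 0" using False l2norm_nn[of f] by (simp add: n_def)
  define h where "h = (\<lambda>x. complex_of_real (1/n) * f x)"
  have hV: "h \<in> ell2 m UNIV" unfolding h_def by (rule ell2_scale[OF f])
  have hn: "l2norm m h = 1" unfolding h_def norm_scale norm_of_real using np by (simp add: n_def)
  have lh: "laplacian b m h = (\<lambda>x. complex_of_real (1/n) * laplacian b m f x)"
    unfolding h_def by (rule ext) (simp only: lap_eq Lr_scale times_divide_eq_right)
  have "l2norm m (laplacian b m h) \<le> laplacian_norm b m"
    unfolding laplacian_norm_def
  proof (rule cSup_upper)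
    show "l2norm m (laplacian b m h) \<in> {l2norm m (laplacian b m f) |f. f \<in> ell2 m UNIV \<and> l2norm m f \<le> 1}"
      using hV hn by auto
    show "bdd_above {l2norm m (laplacian b m f) |f. f \<in> ell2 m UNIV \<and> l2norm m f \<le> 1}"
    proof (rule bdd_aboveI)
      fix z assume "z \<in> {l2norm m (laplacian b m f) |f. f \<in> ell2 m UNIV \<and> l2norm m f \<le> 1}"
      then obtain g where g: "g \<in> ell2 m UNIV" "l2norm m g \<le> 1" "z = l2norm m (laplacian b m g)" by blast
      have "z \<le> 2 * dd * l2norm m g" using lap_ell2(2)[OF g(1)] g(3) by simp
      also have "\<dots> \<le> 2 * dd * 1" using g(2) dd_nn by (intro mult_left_mono) auto
      finally show "z \<le> 2 * dd" by simp
    qed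
  qed
  moreover have "l2norm m (laplacian b m h) = l2norm m (laplacian b m f) / n"
    unfolding lh norm_scale using np by (simp add: norm_divide)
  ultimately show ?thesis using np by (simp add: n_def divide_le_eq mult.commute)
qed


lemma ind_sum:
  fixes h :: "'a \<Rightarrow> real"
  assumes "h summable_on S"
  shows "(\<lambda>x. if x \<in> S then h x else 0) summable_on UNIV"
    and "(\<Sum>\<^sub>\<infinity>x. if x \<in> S then h x else 0) = (\<Sum>\<^sub>\<infinity>x\<in>S. h x)"
proof -
  have "((\<lambda>x. if x \<in> S then h x else 0) has_sum (\<Sum>\<^sub>\<infinity>x\<in>S. h x)) UNIV \<longleftrightarrow> (h has_sum (\<Sum>\<^sub>\<infinity>x\<in>S. h x)) S"
    by (rule has_sum_cong_neutral) auto
  then have H: "((\<lambda>x. if x \<in> S then h x else 0) has_sum (\<Sum>\<^sub>\<infinity>x\<in>S. h x)) UNIV" using assms by simp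
  then show "(\<lambda>x. if x \<in> S then h x else 0) summable_on UNIV" by (rule has_sum_imp_summable)
  show "(\<Sum>\<^sub>\<infinity>x. if x \<in> S then h x else 0) = (\<Sum>\<^sub>\<infinity>x\<in>S. h x)" using H by (rule infsumI)
qed

lemma test_bound:
  assumes vU: "vol m UNIV < \<infinity>" and vO: "vol m \<Omega> < \<infinity>" and ne: "\<Omega> \<noteq> {}"
  shows "\<exists>u \<in> ell2 m \<Omega>. l2norm m u = 1 \<and>
    E2 u \<le> laplacian_norm b m * (enn2real (vol m UNIV) - enn2real (vol m \<Omega>)) / enn2real (vol m UNIV)"
proof -
  define N where "N = laplacian_norm b m"
  have mU: "m summable_on UNIV" by (rule vol_fin(1)[OF vU])
  have mO: "m summable_on \<Omega>" by (rule vol_fin(1)[OF vO])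
  have mC: "m summable_on (- \<Omega>)" using mU by (rule summable_on_subset) simp
  define X where "X = (\<Sum>\<^sub>\<infinity>x. m x)"
  define A where "A = (\<Sum>\<^sub>\<infinity>x\<in>\<Omega>. m x)"
  define B where "B = (\<Sum>\<^sub>\<infinity>x\<in>-\<Omega>. m x)"
  have XAB: "X = A + B"
  proof -
    have "(\<Sum>\<^sub>\<infinity>x\<in>\<Omega> \<union> -\<Omega>. m x) = A + B" unfolding A_def B_def by (rule infsum_Un_disjoint[OF mO mC]) simp
    then show ?thesis by (simp add: X_def)
  qed
  have eX: "enn2real (vol m UNIV) = X" using vol_fin(3)[OF vU] by (simp add: X_def)
  have eA: "enn2real (vol m \<Omega>) = A" using vol_fin(3)[OF vO] by (simp add: A_def)
  obtain x0 where x0: "x0 \<in> \<Omega>" using ne by blast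
  have "sum m {x0} \<le> A" unfolding A_def by (rule finite_sum_le_infsum[OF mO]) (use x0 in auto)
  then have Ap: "A > 0" using m_pos[of x0] by simp
  have Bn: "B \<ge> 0" unfolding B_def by (intro infsum_nonneg) simp
  define u0 where "u0 = (\<lambda>x. if x \<in> \<Omega> then (1::complex) else 0)"
  have nu0: "nsq u0 = (\<lambda>x. if x \<in> \<Omega> then m x else 0)" by (auto simp: fun_eq_iff nsq_def u0_def)
  have u0V: "u0 \<in> ell2 m \<Omega>" using ind_sum(1)[OF mO] by (simp add: ell2_iff nu0) (simp add: u0_def)
  have u0n: "(l2norm m u0)\<^sup>2 = A" unfolding l2norm_sq nu0 ind_sum(2)[OF mO] A_def ..
  define g where "g = (\<lambda>x. if x \<in> \<Omega> then complex_of_real B else complex_of_real (- A))"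
  have ng: "nsq g = (\<lambda>x. (if x \<in> \<Omega> then B\<^sup>2 * m x else 0) + (if x \<in> - \<Omega> then A\<^sup>2 * m x else 0))"
    by (auto simp: fun_eq_iff nsq_def g_def)
  have s1: "(\<lambda>x. B\<^sup>2 * m x) summable_on \<Omega>" by (rule summable_on_cmult_right[OF mO])
  have s2: "(\<lambda>x. A\<^sup>2 * m x) summable_on (- \<Omega>)" by (rule summable_on_cmult_right[OF mC])
  have gS: "nsq g summable_on UNIV" unfolding ng by (intro summable_on_add ind_sum(1) s1 s2)
  have gU: "g \<in> ell2 m UNIV" using gS by (simp add: ell2_iff)
  have gn: "(l2norm m g)\<^sup>2 = B\<^sup>2 * A + A\<^sup>2 * B"
    unfolding l2norm_sq ng
    by (subst infsum_add) (use ind_sum[OF s1] ind_sum[OF s2] in \<open>auto simp: infsum_cmult_right' A_def B_def\<close>)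
  have "E2 g = E2 (\<lambda>x. complex_of_real (A + B) * u0 x)"
    by (rule E2_cong) (auto simp: g_def u0_def algebra_simps)
  also have "\<dots> = (A + B)\<^sup>2 * E2 u0" unfolding E2_scale norm_of_real using Ap Bn by simp
  finally have Eg: "E2 g = (A + B)\<^sup>2 * E2 u0" .
  have "E2 g = Re (energy b g g)" using energy_self[OF gU] by simp
  also have "\<dots> = Re (l2inner m (laplacian b m g) g)" using green[OF gU gU] by simp
  also have "\<dots> \<le> cmod (l2inner m (laplacian b m g) g)" by (rule complex_Re_le_cmod)
  also have "\<dots> \<le> l2norm m (laplacian b m g) * l2norm m g" by (rule ip_bound[OF lap_ell2(1)[OF gU] gU])
  also have "\<dots> \<le> N * l2norm m g * l2norm m g"
    using lapnorm_bound[OF gU] l2norm_nn[of g] by (simp add: N_def mult_right_mono)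
  also have "\<dots> = N * (B\<^sup>2 * A + A\<^sup>2 * B)" using gn by (simp add: power2_eq_square)
  finally have "(A + B)\<^sup>2 * E2 u0 \<le> N * (A * B) * (A + B)" unfolding Eg by (simp add: power2_eq_square algebra_simps)
  then have "(A + B) * ((A + B) * E2 u0) \<le> (A + B) * (N * (A * B))" by (simp add: power2_eq_square algebra_simps)
  then have key: "(A + B) * E2 u0 \<le> N * (A * B)" using Ap Bn by simp
  define u where "u = (\<lambda>x. complex_of_real (1 / sqrt A) * u0 x)"
  have uV: "u \<in> ell2 m \<Omega>" unfolding u_def by (rule ell2_scale[OF u0V])
  have l0: "l2norm m u0 = sqrt A" using u0n l2norm_nn[of u0] by (metis real_sqrt_unique)
  have un: "l2norm m u = 1" unfolding u_def norm_scale norm_of_real l0 using Ap by simp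
  have Eu: "E2 u = E2 u0 / A" unfolding u_def E2_scale norm_of_real using Ap by (simp add: power_divide)
  have "E2 u0 / A \<le> N * B / (A + B)"
    using key Ap Bn by (simp add: divide_le_eq le_divide_eq algebra_simps add_pos_nonneg)
  then have "E2 u \<le> N * (X - A) / X" using XAB Eu by simp
  then show ?thesis using uV un eX eA by (auto simp: N_def)
qed

end

theorem theorem3p2:
  fixes b :: "'a::countable \<Rightarrow> 'a \<Rightarrow> real" and m :: "'a \<Rightarrow> real" and \<Omega> :: "'a set"
  assumes "weighted_graph b m" and "graph_connected b" and "condB b m" and "condM m"
    and "\<Omega> \<noteq> {}" and "\<Omega> \<noteq> UNIV"
    and "vol m \<Omega> < \<infinity>" and "inradius b \<Omega> < \<infinity>"
  shows "dirichlet_bottom b m \<Omega> \<ge> 1 / (real_of_ereal (inradius b \<Omega>) * enn2real (vol m \<Omega>)) \<and>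
    (vol m UNIV < \<infinity> \<longrightarrow>
       dirichlet_bottom b m \<Omega> \<le> laplacian_norm b m *
         (enn2real (vol m UNIV) - enn2real (vol m \<Omega>)) / enn2real (vol m UNIV))"
proof -
  interpret wg b m by (rule wg.intro) (rule assms)+
  let ?V = "ell2 m \<Omega>"
  define c where "c = 1 / (real_of_ereal (inradius b \<Omega>) * enn2real (vol m \<Omega>))"
  define Sp where "Sp = {t::real. complex_of_real t \<in> op_spectrum ?V (dirichlet_laplacian b m \<Omega>)}"
  have db: "dirichlet_bottom b m \<Omega> = Inf Sp" by (simp add: dirichlet_bottom_def Sp_def)
  have Sp_iff: "t \<in> Sp \<longleftrightarrow> \<not> bij_betw (Tt \<Omega> t) ?V ?V" for t
  proof -
    have "bij_betw (\<lambda>f x. dirichlet_laplacian b m \<Omega> f x - complex_of_real t * f x) ?V ?V \<longleftrightarrow> bij_betw (Tt \<Omega> t) ?V ?V"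
      by (rule bij_betw_cong) (simp add: DL_eq Tt_def)
    then show ?thesis by (simp add: Sp_def op_spectrum_def)
  qed
  have low: "c * (l2norm m f)\<^sup>2 \<le> E2 f" if "f \<in> ?V" for f
    unfolding c_def by (rule rayleigh_lower[OF assms(2) assms(8) assms(7) that])
  have notin: "t \<notin> Sp" if tc: "t < c" for t
  proof -
    have al: "0 < c - t" using tc by simp
    have "bij_betw (Tt \<Omega> t) ?V ?V"
    proof (rule coercive_bij[where K = "2 * dd + \<bar>t\<bar> + 1" and \<alpha> = "c - t" and T = "Tt \<Omega> t",
          OF Tt_in Tt_add Tt_scale Tt_sym Tt_bdd K_pos])
      fix f assume f: "f \<in> ?V"
      show "(c - t) * (l2norm m f)\<^sup>2 \<le> Re (l2inner m (Tt \<Omega> t f) f)"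
        using low[OF f] Tt_Re[OF f, of t] by (simp add: algebra_simps)
    next
      show "0 < c - t" by (rule al)
    qed
    then show ?thesis using Sp_iff by simp
  qed
  define Q where "Q = {E2 f | f. f \<in> ?V \<and> l2norm m f = 1}"
  obtain x0 where x0: "x0 \<in> \<Omega>" using assms(5) by blast
  define n0 where "n0 = l2norm m (dlt x0)"
  have d0: "dlt x0 \<in> ?V" by (rule dlt_ell2[OF x0])
  have n0p: "n0 > 0"
  proof -
    have "dlt x0 \<noteq> (\<lambda>x. 0)" by (auto simp: dlt_def fun_eq_iff)
    then have "n0 \<noteq> 0" using norm_zero_iff[OF d0] by (simp add: n0_def)
    then show ?thesis using l2norm_nn[of "dlt x0"] by (simp add: n0_def)
  qed
  define f0 where "f0 = (\<lambda>x. complex_of_real (1 / n0) * dlt x0 x)"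
  have f0V: "f0 \<in> ?V" unfolding f0_def by (rule ell2_scale[OF d0])
  have f0n: "l2norm m f0 = 1" unfolding f0_def norm_scale norm_of_real using n0p by (simp add: n0_def)
  have Qne: "Q \<noteq> {}" using f0V f0n by (auto simp: Q_def)
  have Qbdd: "bdd_below Q"
  proof (rule bdd_belowI[of _ 0])
    fix q assume "q \<in> Q"
    then obtain f where "f \<in> ?V" "q = E2 f" by (auto simp: Q_def)
    then show "0 \<le> q" using energy_self by blast
  qed
  define lam where "lam = Inf Q"
  have lam_le: "lam * (l2norm m f)\<^sup>2 \<le> E2 f" if f: "f \<in> ?V" for f
  proof (cases "l2norm m f = 0")
    case True then show ?thesis using energy_self[OF f] by simp
  next
    case False
    define n where "n = l2norm m f"
    have np: "n > 0" using False l2norm_nn[of f] by (simp add: n_def)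
    define h where "h = (\<lambda>x. complex_of_real (1 / n) * f x)"
    have hV: "h \<in> ?V" unfolding h_def by (rule ell2_scale[OF f])
    have hn: "l2norm m h = 1" unfolding h_def norm_scale norm_of_real using np by (simp add: n_def)
    have Eh: "E2 h = E2 f / n\<^sup>2" unfolding h_def E2_scale norm_of_real using np by (simp add: power_divide)
    have "lam \<le> E2 h" unfolding lam_def by (rule cInf_lower[OF _ Qbdd]) (use hV hn Q_def in auto)
    then show ?thesis using Eh np by (simp add: n_def le_divide_eq)
  qed
  have lam_in: "lam \<in> Sp"
  proof -
    have "\<not> bij_betw (Tt \<Omega> lam) ?V ?V"
    proof (rule bottom_not_bij[where K = "2 * dd + \<bar>lam\<bar> + 1" and T = "Tt \<Omega> lam",
          OF Tt_in Tt_add Tt_scale Tt_sym Tt_bdd K_pos])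
      fix f assume f: "f \<in> ?V"
      show "0 \<le> Re (l2inner m (Tt \<Omega> lam f) f)" using lam_le[OF f] Tt_Re[OF f, of lam] by simp
    next
      fix \<epsilon> :: real assume e: "\<epsilon> > 0"
      obtain q where q: "q \<in> Q" "q < lam + \<epsilon>" using cInf_lessD[OF Qne, of "lam + \<epsilon>"] e by (auto simp: lam_def)
      then obtain f where f: "f \<in> ?V" "l2norm m f = 1" "q = E2 f" by (auto simp: Q_def)
      show "\<exists>f\<in>?V. l2norm m f = 1 \<and> Re (l2inner m (Tt \<Omega> lam f) f) < \<epsilon>"
      proof (rule bexI[OF _ f(1)])
        show "l2norm m f = 1 \<and> Re (l2inner m (Tt \<Omega> lam f) f) < \<epsilon>"
          using f q Tt_Re[OF f(1), of lam] by simp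
      qed
    qed
    then show ?thesis using Sp_iff by simp
  qed
  have Spne: "Sp \<noteq> {}" using lam_in by blast
  have Sp_low: "c \<le> t" if "t \<in> Sp" for t using notin[of t] that by linarith
  have Sbdd: "bdd_below Sp" using Sp_low by (rule bdd_belowI)
  have partA: "c \<le> Inf Sp" by (rule cInf_greatest[OF Spne Sp_low])
  have partB: "Inf Sp \<le> lam" by (rule cInf_lower[OF lam_in Sbdd])
  have partC: "dirichlet_bottom b m \<Omega> \<le> laplacian_norm b m *
         (enn2real (vol m UNIV) - enn2real (vol m \<Omega>)) / enn2real (vol m UNIV)" if vU: "vol m UNIV < \<infinity>"
  proof -
    obtain u where u: "u \<in> ?V" "l2norm m u = 1"
      "E2 u \<le> laplacian_norm b m * (enn2real (vol m UNIV) - enn2real (vol m \<Omega>)) / enn2real (vol m UNIV)"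
      using test_bound[OF vU assms(7) assms(5)] by blast
    have "lam \<le> E2 u" unfolding lam_def by (rule cInf_lower[OF _ Qbdd]) (use u Q_def in auto)
    then show ?thesis using db partB u(3) by linarith
  qed
  show ?thesis using db partA partC unfolding c_def by simp
qed

end
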